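(* Let $n\ge1$, $p\ge4$, $\mathbb{T}^n=\mathbb{R}^n/\mathbb{Z}^n$, and $b\in C^\infty(\mathbb{T}^n\times[0,\infty);\mathbb{R}^n)$ with $\|b\|_{C^k}<\infty$ for all $k$. Let $W_t$ be a standard $n$-dimensional Brownian motion; for $\varepsilon>0$ let $(X^\varepsilon_t,V^\varepsilon_t)$ solve $dX^\varepsilon_t=V^\varepsilon_tdt$, $dV^\varepsilon_t=\frac1\varepsilon(b(X^\varepsilon_t,t)-V^\varepsilon_t)dt+\sqrt{2/\varepsilon}\,dW_t$, with $X^\varepsilon_0=x$ deterministic and $\tilde V^\varepsilon_0:=V^\varepsilon_0-b(x,0)$ satisfying $\mathbf{E}\tilde V^\varepsilon_0=0$, $\mathbf{E}|\tilde V^\varepsilon_0|^p<\infty$. Writing $b_s=b(X^\varepsilon_s,s)$ (and similarly for derivatives), define $$\hat R_t=\varepsilon e^{-t/\varepsilon}\big(\partial_tb(x,0)+D_xb(x,0)V^\varepsilon_0\big),$$ $$U_t=\varepsilon\int_0^te^{-(t-s)/\varepsilon}\big(\partial_t^2b_s+2\,\partial_tD_xb_s\,V^\varepsilon_s+(D_x^2b_s\,V^\varepsilon_s)V^\varepsilon_s\big)\,ds .$$ Then there exists a constant $C>0$, depending only on $b$ (and on $\mathbf{E}|\tilde V^\varepsilon_0|^p$), such that for all $t\ge0$ $$\mathbf{E}|\hat R_t|\le C\varepsilon e^{-t/\varepsilon}\qquad\text{and}\qquad\mathbf{E}|U_t|\le C\varepsilon^2 .$$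
   Context: For $f$ on $S=\mathbb{T}^n\times[0,\infty)$, $\|f\|_{C^k}=\max_{|\alpha|\le k}\sup_{z\in S}|D^\alpha f(z)|$. $D_xb$ is the Jacobian of $b$ in $x$, $\partial_tD_xb$ its time derivative, and $(D_x^2b\,v)v$ denotes the vector with components $\sum_{k,l}\partial_{x_k}\partial_{x_l}b^i\,v^kv^l$. $b$ is viewed as $\mathbb{Z}^n$-periodic in $x$ on $\mathbb{R}^n$. $V^\varepsilon_0$ is measurable with respect to the initial sigma-algebra of the filtration of $W$. *)

theory Defs
  imports "HOL-Probability.Probability"
begin

fun iter_dd :: "'z::real_normed_vector list \<Rightarrow> ('z \<Rightarrow> 'b::real_normed_vector) \<Rightarrow> 'z \<Rightarrow> 'b" where
  "iter_dd [] f = f"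
| "iter_dd (u # us) f = (\<lambda>z. frechet_derivative (iter_dd us f) (at z) u)"

text \<open>b is smooth and all partial derivatives of all orders are bounded on
  S = R^n x [0,oo) (b given on R^n x R, i.e. a smooth extension across t = 0).\<close>
definition smooth_bounded_derivs :: "((real^'n) \<times> real \<Rightarrow> real^'n) \<Rightarrow> bool" where
  "smooth_bounded_derivs b \<longleftrightarrow>
     (\<forall>us \<in> lists Basis.
        (\<forall>z. iter_dd us b differentiable (at z)) \<and>
        bounded ((iter_dd us b) ` {z. snd z \<ge> 0}))"

text \<open>b is Z^n-periodic in x, i.e. a function on the torus.\<close>
definition periodic_in_x :: "((real^'n) \<times> real \<Rightarrow> real^'n) \<Rightarrow> bool" where
  "periodic_in_x b \<longleftrightarrow>
     (\<forall>x t k. (\<forall>i. k $ i \<in> \<int>) \<longrightarrow> b (x + k, t) = b (x, t))"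

definition std_brownian_motion :: "'a measure \<Rightarrow> (real \<Rightarrow> 'a \<Rightarrow> real^'n) \<Rightarrow> bool" where
  "std_brownian_motion M W \<longleftrightarrow>
     prob_space M \<and>
     (\<forall>t. W t \<in> borel_measurable M) \<and>
     (\<forall>\<omega>\<in>space M. W 0 \<omega> = 0 \<and> continuous_on {0..} (\<lambda>t. W t \<omega>)) \<and>
     (\<forall>ts :: real list. sorted_wrt (<) ts \<and> (\<forall>t\<in>set ts. 0 \<le> t) \<longrightarrow>
        prob_space.indep_vars M (\<lambda>_. borel)
          (\<lambda>(j, i) \<omega>. (W (ts ! Suc j) \<omega> - W (ts ! j) \<omega>) $ i)
          ({..<length ts - 1} \<times> UNIV) \<and>
        (\<forall>j < length ts - 1. \<forall>i.
           distributed M lborel (\<lambda>\<omega>. (W (ts ! Suc j) \<omega> - W (ts ! j) \<omega>) $ i)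
             (\<lambda>y. ennreal (normal_density 0 (sqrt (ts ! Suc j - ts ! j)) y))))"

end

theory Submission imports Defs begin

lemma floor_div_tendsto: "(\<lambda>k. real_of_int \<lfloor>real (Suc k) * a\<rfloor> / real (Suc k)) \<longlonglongrightarrow> a"
proof (rule real_tendsto_sandwich[where f="\<lambda>k. a - 1 / real (Suc k)" and h="\<lambda>k. a"])
  show "\<forall>\<^sub>F k in sequentially. a - 1 / real (Suc k) \<le> real_of_int \<lfloor>real (Suc k) * a\<rfloor> / real (Suc k)"
  proof (intro always_eventually allI)
    fix k
    have "real (Suc k) * a - 1 \<le> real_of_int \<lfloor>real (Suc k) * a\<rfloor>" by linarith
    then have "(real (Suc k) * a - 1) / real (Suc k) \<le> real_of_int \<lfloor>real (Suc k) * a\<rfloor> / real (Suc k)"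
      by (intro divide_right_mono) auto
    moreover have "(real (Suc k) * a - 1) / real (Suc k) = a - 1 / real (Suc k)"
      by (simp add: field_simps)
    ultimately show "a - 1 / real (Suc k) \<le> real_of_int \<lfloor>real (Suc k) * a\<rfloor> / real (Suc k)"
      by simp
  qed
  show "\<forall>\<^sub>F k in sequentially. real_of_int \<lfloor>real (Suc k) * a\<rfloor> / real (Suc k) \<le> a"
  proof (intro always_eventually allI)
    fix k
    have "real_of_int \<lfloor>real (Suc k) * a\<rfloor> \<le> real (Suc k) * a" by linarith
    then show "real_of_int \<lfloor>real (Suc k) * a\<rfloor> / real (Suc k) \<le> a"
      by (simp add: field_simps)
  qed
  have "(\<lambda>k. 1 / real (Suc k)) \<longlonglongrightarrow> 0" by (rule LIMSEQ_Suc[OF lim_const_over_n[of 1]])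
  then show "(\<lambda>k. a - 1 / real (Suc k)) \<longlonglongrightarrow> a"
    using tendsto_diff[OF tendsto_const[of a]] by fastforce
qed simp

lemma carath_meas:
  fixes f :: "real \<Rightarrow> 'a \<Rightarrow> 'b::{metric_space, second_countable_topology}"
  assumes meas: "\<And>s. s \<ge> 0 \<Longrightarrow> f s \<in> borel_measurable M"
    and cont: "\<And>\<omega>. \<omega> \<in> space M \<Longrightarrow> continuous_on {0..} (\<lambda>s. f s \<omega>)"
  shows "(\<lambda>z. f (max 0 (fst z)) (snd z)) \<in> borel_measurable (lborel \<Otimes>\<^sub>M M)"
proof (rule borel_measurable_LIMSEQ_metric)
  fix k :: nat
  let ?g = "\<lambda>z::real \<times> 'a. f (max 0 (real_of_int \<lfloor>real (Suc k) * fst z\<rfloor> / real (Suc k))) (snd z)"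
  show "?g \<in> borel_measurable (lborel \<Otimes>\<^sub>M M)"
  proof (rule measurable_compose_countable[where f="\<lambda>j z. f (max 0 (real_of_int j / real (Suc k))) (snd z)"
        and g="\<lambda>z. \<lfloor>real (Suc k) * fst z\<rfloor>"])
    fix j :: int
    show "(\<lambda>z. f (max 0 (real_of_int j / real (Suc k))) (snd z)) \<in> borel_measurable (lborel \<Otimes>\<^sub>M M)"
      using meas[of "max 0 (real_of_int j / real (Suc k))"] by measurable
  next
    show "(\<lambda>z. \<lfloor>real (Suc k) * fst z\<rfloor>) \<in> measurable (lborel \<Otimes>\<^sub>M M) (count_space UNIV)"
      by measurable
  qed
next
  fix z :: "real \<times> 'a" assume z: "z \<in> space (lborel \<Otimes>\<^sub>M M)"
  then have om: "snd z \<in> space M" by (simp add: space_pair_measure mem_Times_iff)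
  have lim2: "(\<lambda>k. max 0 (real_of_int \<lfloor>real (Suc k) * fst z\<rfloor> / real (Suc k))) \<longlonglongrightarrow> max 0 (fst z)"
    by (intro tendsto_max tendsto_const floor_div_tendsto)
  have c: "continuous_on {0..} (\<lambda>s. f s (snd z))" using cont om by blast
  show "(\<lambda>k. f (max 0 (real_of_int \<lfloor>real (Suc k) * fst z\<rfloor> / real (Suc k))) (snd z)) \<longlonglongrightarrow> f (max 0 (fst z)) (snd z)"
    by (rule continuous_on_tendsto_compose[OF c lim2]) auto
qed


abbreviation E :: "'n::finite \<Rightarrow> (real^'n) \<times> real" where "E i \<equiv> (axis i 1, 0)"

lemma E_Basis: "E i \<in> Basis"
  by (simp add: Basis_prod_def)

lemma T_Basis: "((0::real^'n), 1::real) \<in> Basis"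
  by (simp add: Basis_prod_def)

lemma vec_decomp: "((v::real^'n), 0::real) = (\<Sum>i\<in>UNIV. v$i *\<^sub>R E i)"
proof -
  have "(\<Sum>i\<in>UNIV. v$i *\<^sub>R axis i (1::real)) = v"
    using basis_expansion[of v] by (simp add: scalar_mult_eq_scaleR)
  then show ?thesis by (simp add: prod_eq_iff fst_sum snd_sum)
qed

lemma fd_lin:
  fixes g :: "(real^'n) \<times> real \<Rightarrow> 'b::real_normed_vector"
  assumes "g differentiable (at z)"
  shows "frechet_derivative g (at z) (v, 0) = (\<Sum>i\<in>UNIV. v$i *\<^sub>R frechet_derivative g (at z) (E i))"
proof -
  have l: "linear (frechet_derivative g (at z))" by (rule linear_frechet_derivative[OF assms])
  have "frechet_derivative g (at z) (v,0) = frechet_derivative g (at z) (\<Sum>i\<in>UNIV. v$i *\<^sub>R E i)"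
    using vec_decomp[of v] by (rule arg_cong)
  also have "\<dots> = (\<Sum>i\<in>UNIV. v$i *\<^sub>R frechet_derivative g (at z) (E i))"
    by (simp only: linear_sum[OF l] linear_scale[OF l])
  finally show ?thesis .
qed

lemma fd_sum:
  fixes g :: "'i \<Rightarrow> (real^'n) \<times> real \<Rightarrow> 'b::real_normed_vector"
  assumes "\<And>i. g i differentiable (at z)" "finite I"
  shows "frechet_derivative (\<lambda>z. \<Sum>i\<in>I. c i *\<^sub>R g i z) (at z) w = (\<Sum>i\<in>I. c i *\<^sub>R frechet_derivative (g i) (at z) w)"
proof -
  have hd: "((\<lambda>z. \<Sum>i\<in>I. c i *\<^sub>R g i z) has_derivative (\<lambda>w. \<Sum>i\<in>I. c i *\<^sub>R frechet_derivative (g i) (at z) w)) (at z)"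
    using assms by (intro has_derivative_sum has_derivative_scaleR_right frechet_derivative_works[THEN iffD1]) auto
  have "frechet_derivative (\<lambda>z. \<Sum>i\<in>I. c i *\<^sub>R g i z) (at z) = (\<lambda>w. \<Sum>i\<in>I. c i *\<^sub>R frechet_derivative (g i) (at z) w)"
    by (rule frechet_derivative_at[OF hd, symmetric])
  then show ?thesis by simp
qed

context
  fixes b :: "(real^'n) \<times> real \<Rightarrow> real^'n"
  assumes sb: "smooth_bounded_derivs b"
begin

lemma dd_diff: "set us \<subseteq> Basis \<Longrightarrow> iter_dd us b differentiable (at z)"
proof -
  assume "set us \<subseteq> Basis"
  then have "us \<in> lists Basis" by auto
  then show ?thesis using sb unfolding smooth_bounded_derivs_def by blast
qed

lemma dd_cont: "set us \<subseteq> Basis \<Longrightarrow> continuous_on UNIV (iter_dd us b)"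
  by (meson continuous_at_imp_continuous_on dd_diff differentiable_imp_continuous_within)

lemma dd1: "iter_dd [(v, 0)] b = (\<lambda>z. \<Sum>i\<in>UNIV. v$i *\<^sub>R iter_dd [E i] b z)"
proof
  fix z
  have "b differentiable (at z)" using dd_diff[of "[]"] by simp
  then show "iter_dd [(v, 0)] b z = (\<Sum>i\<in>UNIV. v$i *\<^sub>R iter_dd [E i] b z)"
    by (simp add: fd_lin)
qed

lemma dd2t: "iter_dd [(0,1), (v, 0)] b z = (\<Sum>i\<in>UNIV. v$i *\<^sub>R iter_dd [(0,1), E i] b z)"
proof -
  have "iter_dd [(0,1), (v, 0)] b z = frechet_derivative (iter_dd [(v, 0)] b) (at z) (0,1)"
    by simp
  also have "\<dots> = frechet_derivative (\<lambda>z. \<Sum>i\<in>UNIV. v$i *\<^sub>R iter_dd [E i] b z) (at z) (0,1)"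
    by (simp only: dd1[of v])
  also have "\<dots> = (\<Sum>i\<in>UNIV. v$i *\<^sub>R frechet_derivative (iter_dd [E i] b) (at z) (0,1))"
  proof (rule fd_sum)
    fix i
    show "iter_dd [E i] b differentiable (at z)" by (rule dd_diff) (simp add: E_Basis)
  qed simp
  finally show ?thesis by simp
qed

lemma dd2v: "iter_dd [(v, 0), (v, 0)] b z = (\<Sum>i\<in>UNIV. v$i *\<^sub>R (\<Sum>j\<in>UNIV. v$j *\<^sub>R iter_dd [E j, E i] b z))"
proof -
  have "iter_dd [(v,0), (v, 0)] b z = frechet_derivative (iter_dd [(v, 0)] b) (at z) (v,0)"
    by simp
  also have "\<dots> = frechet_derivative (\<lambda>z. \<Sum>i\<in>UNIV. v$i *\<^sub>R iter_dd [E i] b z) (at z) (v,0)"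
    by (simp only: dd1[of v])
  also have "\<dots> = (\<Sum>i\<in>UNIV. v$i *\<^sub>R frechet_derivative (iter_dd [E i] b) (at z) (v,0))"
  proof (rule fd_sum)
    fix i
    show "iter_dd [E i] b differentiable (at z)" by (rule dd_diff) (simp add: E_Basis)
  qed simp
  also have "\<dots> = (\<Sum>i\<in>UNIV. v$i *\<^sub>R (\<Sum>j\<in>UNIV. v$j *\<^sub>R iter_dd [E j, E i] b z))"
  proof (rule sum.cong[OF refl])
    fix i
    have "iter_dd [E i] b differentiable (at z)" by (rule dd_diff) (simp add: E_Basis)
    then show "v$i *\<^sub>R frechet_derivative (iter_dd [E i] b) (at z) (v,0) = v$i *\<^sub>R (\<Sum>j\<in>UNIV. v$j *\<^sub>R iter_dd [E j, E i] b z)"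
      by (simp add: fd_lin)
  qed
  finally show ?thesis .
qed

lemma dd_bound: "\<exists>B>0. \<forall>us z. set us \<subseteq> Basis \<and> length us \<le> 2 \<and> snd z \<ge> 0 \<longrightarrow> norm (iter_dd us b z) \<le> B"
proof -
  let ?L = "{us. set us \<subseteq> (Basis :: ((real^'n) \<times> real) set) \<and> length us \<le> 2}"
  have fin: "finite ?L" by (rule finite_lists_length_le) simp
  have "bounded (\<Union>us\<in>?L. (iter_dd us b) ` {z. snd z \<ge> 0})"
    using sb fin unfolding smooth_bounded_derivs_def by (intro bounded_UN) (auto simp: in_lists_conv_set)
  then obtain B where B: "\<And>y. y \<in> (\<Union>us\<in>?L. (iter_dd us b) ` {z. snd z \<ge> 0}) \<Longrightarrow> norm y \<le> B"
    unfolding bounded_iff by blast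
  have "norm (iter_dd us b z) \<le> max B 1" if "set us \<subseteq> Basis" "length us \<le> 2" "snd z \<ge> 0" for us z
  proof -
    have "norm (iter_dd us b z) \<le> B" using that by (intro B) auto
    then show ?thesis by simp
  qed
  then show ?thesis
    by (intro exI[of _ "max B 1"]) auto
qed

end

lemma norm_lin_bound:
  fixes y :: "'n::finite \<Rightarrow> 'b::real_normed_vector"
  assumes "\<And>i. norm (y i) \<le> B"
  shows "norm (\<Sum>i\<in>UNIV. (v::real^'n)$i *\<^sub>R y i) \<le> real CARD('n) * norm v * B"
proof -
  have "norm (\<Sum>i\<in>UNIV. v$i *\<^sub>R y i) \<le> (\<Sum>i\<in>UNIV. norm (v$i *\<^sub>R y i))" by (rule norm_sum)
  also have "\<dots> \<le> (\<Sum>i\<in>(UNIV::'n set). norm v * B)"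
  proof (rule sum_mono)
    fix i
    have "norm (v$i *\<^sub>R y i) = \<bar>v$i\<bar> * norm (y i)" by simp
    also have "\<dots> \<le> norm v * B"
      by (intro mult_mono component_le_norm_cart assms) auto
    finally show "norm (v$i *\<^sub>R y i) \<le> norm v * B" .
  qed
  finally show ?thesis by simp
qed


lemma ode_solution:
  fixes Vf bf Wf :: "real \<Rightarrow> real^'n" and \<epsilon> \<sigma> t :: real
  assumes ep: "\<epsilon> > 0" and t: "t \<ge> 0"
    and cV: "continuous_on {0..t} Vf" and cb: "continuous_on {0..t} bf" and cW: "continuous_on {0..t} Wf"
    and W0: "Wf 0 = 0"
    and eq: "\<And>u. 0 \<le> u \<Longrightarrow> u \<le> t \<Longrightarrow> Vf u = Vf 0 + integral {0..u} (\<lambda>s. (1/\<epsilon>) *\<^sub>R (bf s - Vf s)) + \<sigma> *\<^sub>R Wf u"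
  shows "Vf t = exp (-t/\<epsilon>) *\<^sub>R Vf 0 + (1/\<epsilon>) *\<^sub>R integral {0..t} (\<lambda>s. exp (-(t-s)/\<epsilon>) *\<^sub>R (bf s - \<sigma> *\<^sub>R Wf s)) + \<sigma> *\<^sub>R Wf t"
proof -
  define g where "g s = (1/\<epsilon>) *\<^sub>R (bf s - Vf s)" for s
  define Y where "Y u = Vf u - \<sigma> *\<^sub>R Wf u" for u
  have cg: "continuous_on {0..t} g" unfolding g_def by (intro continuous_intros cb cV)
  have cY: "continuous_on {0..t} Y" unfolding Y_def by (intro continuous_intros cV cW)
  have Yeq: "Y u = Vf 0 + integral {0..u} g" if "0 \<le> u" "u \<le> t" for u
    using eq[OF that] unfolding Y_def g_def by simp
  have dY: "(Y has_vector_derivative g u) (at u within {0..t})" if u: "u \<in> {0..t}" for u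
  proof -
    have "((\<lambda>u. Vf 0 + integral {0..u} g) has_vector_derivative g u) (at u within {0..t})"
      using has_vector_derivative_add[OF has_vector_derivative_const integral_has_vector_derivative[OF cg u]] by simp
    then show ?thesis
      by (rule has_vector_derivative_transform[OF u, rotated]) (use Yeq in auto)
  qed
  define h where "h s = exp (s/\<epsilon>) *\<^sub>R ((1/\<epsilon>) *\<^sub>R (bf s - \<sigma> *\<^sub>R Wf s))" for s
  have dZ: "((\<lambda>u. exp (u/\<epsilon>) *\<^sub>R Y u) has_vector_derivative h u) (at u within {0..t})" if u: "u \<in> {0..t}" for u
  proof -
    have "((\<lambda>u. exp (u/\<epsilon>) *\<^sub>R Y u) has_vector_derivative (exp (u/\<epsilon>) *\<^sub>R g u + (exp (u/\<epsilon>) * (1/\<epsilon>)) *\<^sub>R Y u)) (at u within {0..t})"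
      by (intro has_vector_derivative_scaleR dY u) (use ep in \<open>auto intro!: derivative_eq_intros\<close>)
    moreover have "exp (u/\<epsilon>) *\<^sub>R g u + (exp (u/\<epsilon>) * (1/\<epsilon>)) *\<^sub>R Y u = h u"
      unfolding h_def g_def Y_def by (simp add: algebra_simps)
    ultimately show ?thesis by simp
  qed
  have "(h has_integral (exp (t/\<epsilon>) *\<^sub>R Y t - exp (0/\<epsilon>) *\<^sub>R Y 0)) {0..t}"
    by (rule fundamental_theorem_of_calculus[OF t dZ])
  then have hi: "integral {0..t} h = exp (t/\<epsilon>) *\<^sub>R Y t - Vf 0"
    using W0 by (simp add: integral_unique Y_def)
  have "integral {0..t} (\<lambda>s. exp (-(t-s)/\<epsilon>) *\<^sub>R (bf s - \<sigma> *\<^sub>R Wf s)) = integral {0..t} (\<lambda>s. (\<epsilon> * exp (-t/\<epsilon>)) *\<^sub>R h s)"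
  proof (rule integral_cong)
    fix s
    have "exp (-(t-s)/\<epsilon>) = exp (-t/\<epsilon>) * exp (s/\<epsilon>)"
      by (simp add: exp_add[symmetric] diff_divide_distrib)
    then show "exp (-(t-s)/\<epsilon>) *\<^sub>R (bf s - \<sigma> *\<^sub>R Wf s) = (\<epsilon> * exp (-t/\<epsilon>)) *\<^sub>R h s"
      unfolding h_def using ep by simp
  qed
  also have "\<dots> = (\<epsilon> * exp (-t/\<epsilon>)) *\<^sub>R (exp (t/\<epsilon>) *\<^sub>R Y t - Vf 0)"
    by (simp add: integral_cmul hi)
  finally have I: "integral {0..t} (\<lambda>s. exp (-(t-s)/\<epsilon>) *\<^sub>R (bf s - \<sigma> *\<^sub>R Wf s)) = (\<epsilon> * exp (-t/\<epsilon>)) *\<^sub>R (exp (t/\<epsilon>) *\<^sub>R Y t - Vf 0)" .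
  have e1: "(1/\<epsilon>) * (\<epsilon> * exp (-t/\<epsilon>)) = exp (-t/\<epsilon>)" using ep by simp
  have e2: "exp (-t/\<epsilon>) * exp (t/\<epsilon>) = 1" by (simp add: exp_add[symmetric])
  have "(1/\<epsilon>) *\<^sub>R integral {0..t} (\<lambda>s. exp (-(t-s)/\<epsilon>) *\<^sub>R (bf s - \<sigma> *\<^sub>R Wf s)) = exp (-t/\<epsilon>) *\<^sub>R (exp (t/\<epsilon>) *\<^sub>R Y t - Vf 0)"
    by (simp only: I scaleR_scaleR e1)
  also have "\<dots> = Y t - exp (-t/\<epsilon>) *\<^sub>R Vf 0"
    by (simp only: scaleR_diff_right scaleR_scaleR e2 scaleR_one)
  finally have "(1/\<epsilon>) *\<^sub>R integral {0..t} (\<lambda>s. exp (-(t-s)/\<epsilon>) *\<^sub>R (bf s - \<sigma> *\<^sub>R Wf s)) = Y t - exp (-t/\<epsilon>) *\<^sub>R Vf 0" .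
  then show ?thesis unfolding Y_def by (simp add: algebra_simps)
qed


lemma kern_int:
  fixes \<epsilon> t :: real
  assumes ep: "\<epsilon> > 0" and t: "t \<ge> 0"
  shows "((\<lambda>s. exp (-(t-s)/\<epsilon>)) has_integral (\<epsilon> - \<epsilon> * exp (-t/\<epsilon>))) {0..t}"
proof -
  have "((\<lambda>s. \<epsilon> * exp (-(t-s)/\<epsilon>)) has_vector_derivative exp (-(t-s)/\<epsilon>)) (at s within {0..t})" for s
  proof -
    have "((\<lambda>s. \<epsilon> * exp (-(t-s)/\<epsilon>)) has_real_derivative \<epsilon> * (exp (-(t-s)/\<epsilon>) * (1/\<epsilon>))) (at s within {0..t})"
      by (auto intro!: derivative_eq_intros)
    then show ?thesis using ep by (simp add: has_real_derivative_iff_has_vector_derivative)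
  qed
  from fundamental_theorem_of_calculus[OF t this] show ?thesis by simp
qed

lemma kern_int_le:
  fixes \<epsilon> t :: real
  assumes ep: "\<epsilon> > 0" and t: "t \<ge> 0"
  shows "integral {0..t} (\<lambda>s. exp (-(t-s)/\<epsilon>)) \<le> \<epsilon>"
proof -
  have "0 \<le> \<epsilon> * exp (-t/\<epsilon>)" using ep by simp
  then show ?thesis using integral_unique[OF kern_int[OF assms]] by linarith
qed

lemma kern_lin_int:
  fixes \<epsilon> t :: real
  assumes ep: "\<epsilon> > 0" and t: "t \<ge> 0"
  shows "((\<lambda>s. exp (-(t-s)/\<epsilon>) * (t - s)) has_integral (\<epsilon>\<^sup>2 - \<epsilon> * (t + \<epsilon>) * exp (-t/\<epsilon>))) {0..t}"
proof -
  have "((\<lambda>s. \<epsilon> * (t - s + \<epsilon>) * exp (-(t-s)/\<epsilon>)) has_vector_derivative exp (-(t-s)/\<epsilon>) * (t - s)) (at s within {0..t})" for s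
  proof -
    have "((\<lambda>s. \<epsilon> * (t - s + \<epsilon>) * exp (-(t-s)/\<epsilon>)) has_real_derivative
       \<epsilon> * (- 1) * exp (-(t-s)/\<epsilon>) + \<epsilon> * (t - s + \<epsilon>) * (exp (-(t-s)/\<epsilon>) * (1/\<epsilon>))) (at s within {0..t})"
      by (auto intro!: derivative_eq_intros)
    moreover have "\<epsilon> * (- 1) * exp (-(t-s)/\<epsilon>) + \<epsilon> * (t - s + \<epsilon>) * (exp (-(t-s)/\<epsilon>) * (1/\<epsilon>)) = exp (-(t-s)/\<epsilon>) * (t - s)"
      using ep by (simp add: field_simps)
    ultimately show ?thesis by (simp add: has_real_derivative_iff_has_vector_derivative)
  qed
  from fundamental_theorem_of_calculus[OF t this] show ?thesis by (simp add: power2_eq_square)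
qed

lemma kern_lin_le:
  fixes \<epsilon> t :: real
  assumes ep: "\<epsilon> > 0" and t: "t \<ge> 0"
  shows "integral {0..t} (\<lambda>s. exp (-(t-s)/\<epsilon>) * (t - s)) \<le> \<epsilon>\<^sup>2"
proof -
  have "0 \<le> \<epsilon> * (t + \<epsilon>) * exp (-t/\<epsilon>)" using ep t by (intro mult_nonneg_nonneg) auto
  then show ?thesis using integral_unique[OF kern_lin_int[OF assms]] by linarith
qed

lemma jensen_int:
  fixes f :: "real \<Rightarrow> real^'n"
  assumes cw: "continuous_on {0..t} w" and cf: "continuous_on {0..t} f"
    and w0: "\<And>s. s \<in> {0..t} \<Longrightarrow> w s \<ge> 0" and w1: "integral {0..t} w \<le> 1"
  shows "(norm (integral {0..t} (\<lambda>s. w s *\<^sub>R f s)))\<^sup>2 \<le> integral {0..t} (\<lambda>s. w s * (norm (f s))\<^sup>2)"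
proof -
  define c where "c = integral {0..t} (\<lambda>s. w s *\<^sub>R f s)"
  have iwf: "(\<lambda>s. w s *\<^sub>R f s) integrable_on {0..t}"
    by (intro integrable_continuous_interval continuous_intros cw cf)
  have iw: "w integrable_on {0..t}" by (intro integrable_continuous_interval cw)
  have i1: "(\<lambda>s. w s * (2 * (f s \<bullet> c) - (norm c)\<^sup>2)) integrable_on {0..t}"
    by (intro integrable_continuous_interval continuous_intros cw cf)
  have i2: "(\<lambda>s. w s * (norm (f s))\<^sup>2) integrable_on {0..t}"
    by (intro integrable_continuous_interval continuous_intros cw cf)
  have "integral {0..t} (\<lambda>s. w s * (2 * (f s \<bullet> c) - (norm c)\<^sup>2))
      = 2 * integral {0..t} (\<lambda>s. (w s *\<^sub>R f s) \<bullet> c) - (norm c)\<^sup>2 * integral {0..t} w"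
  proof -
    have "(\<lambda>s. w s * (2 * (f s \<bullet> c) - (norm c)\<^sup>2)) = (\<lambda>s. 2 * ((w s *\<^sub>R f s) \<bullet> c) - w s * (norm c)\<^sup>2)"
      by (auto simp: algebra_simps)
    moreover have "(\<lambda>s. (w s *\<^sub>R f s) \<bullet> c) integrable_on {0..t}"
      by (intro integrable_continuous_interval continuous_intros cw cf)
    moreover have "(\<lambda>s. w s * (norm c)\<^sup>2) integrable_on {0..t}"
      by (intro integrable_continuous_interval continuous_intros cw)
    ultimately show ?thesis
      by (simp add: integral_diff integrable_on_mult_right)
  qed
  also have "\<dots> = 2 * (norm c)\<^sup>2 - (norm c)\<^sup>2 * integral {0..t} w"
    using integral_component_eq[OF iwf, of c] by (simp add: c_def power2_norm_eq_inner)
  also have "\<dots> \<ge> (norm c)\<^sup>2"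
  proof -
    have "(norm c)\<^sup>2 * integral {0..t} w \<le> (norm c)\<^sup>2 * 1" by (intro mult_left_mono w1) simp
    then show ?thesis by simp
  qed
  finally have A: "(norm c)\<^sup>2 \<le> integral {0..t} (\<lambda>s. w s * (2 * (f s \<bullet> c) - (norm c)\<^sup>2))" .
  have "integral {0..t} (\<lambda>s. w s * (2 * (f s \<bullet> c) - (norm c)\<^sup>2)) \<le> integral {0..t} (\<lambda>s. w s * (norm (f s))\<^sup>2)"
  proof (rule integral_le[OF i1 i2])
    fix s assume s: "s \<in> {0..t}"
    have "0 \<le> (norm (f s - c))\<^sup>2" by simp
    also have "(norm (f s - c))\<^sup>2 = (norm (f s))\<^sup>2 - 2 * (f s \<bullet> c) + (norm c)\<^sup>2"
      by (simp add: power2_norm_eq_inner inner_diff_left inner_diff_right inner_commute)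
    finally have "2 * (f s \<bullet> c) - (norm c)\<^sup>2 \<le> (norm (f s))\<^sup>2" by simp
    then show "w s * (2 * (f s \<bullet> c) - (norm c)\<^sup>2) \<le> w s * (norm (f s))\<^sup>2"
      by (intro mult_left_mono w0 s)
  qed
  with A show ?thesis by (simp add: c_def)
qed


lemma fact_aux: "0 < (\<sigma>::real) \<Longrightarrow> fact (2 * 1) / ((2 / \<sigma>\<^sup>2) ^ 1 * fact 1) = \<sigma>\<^sup>2"
  by simp

lemma normal_second_nn:
  assumes "\<sigma> > 0"
  shows "(\<integral>\<^sup>+y. ennreal (normal_density 0 \<sigma> y) * ennreal (y\<^sup>2) \<partial>lborel) = ennreal (\<sigma>\<^sup>2)"
proof -
  have "(\<integral>\<^sup>+y. ennreal (normal_density 0 \<sigma> y) * ennreal (y\<^sup>2) \<partial>lborel) = (\<integral>\<^sup>+y. ennreal (normal_density 0 \<sigma> y * (y - 0)^(2*1)) \<partial>lborel)"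
    by (intro nn_integral_cong) (simp add: ennreal_mult[symmetric])
  also have "\<dots> = ennreal (integral\<^sup>L lborel (\<lambda>y. normal_density 0 \<sigma> y * (y - 0)^(2*1)))"
    by (intro nn_integral_eq_integral integrable_normal_moment) (use assms in auto)
  also have "integral\<^sup>L lborel (\<lambda>y. normal_density 0 \<sigma> y * (y - 0)^(2*1)) = fact (2 * 1) / ((2 / \<sigma>\<^sup>2) ^ 1 * fact 1)"
    using assms by (rule integral_normal_moment_even)
  also have "\<dots> = \<sigma>\<^sup>2" using assms by simp
  finally show ?thesis .
qed

lemma norm_sq_vec: "(norm (x::real^'n))\<^sup>2 = (\<Sum>i\<in>UNIV. (x$i)\<^sup>2)"
  unfolding power2_norm_eq_inner inner_vec_def by (simp add: power2_eq_square)

lemma bm_second_moment: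
  fixes W :: "real \<Rightarrow> 'a \<Rightarrow> real^'n"
  assumes bm: "std_brownian_motion M W" and s: "0 \<le> s" "s \<le> t"
  shows "(\<integral>\<^sup>+\<omega>. ennreal ((norm (W t \<omega> - W s \<omega>))\<^sup>2) \<partial>M) = ennreal (real CARD('n) * (t - s))"
proof (cases "s = t")
  case True then show ?thesis by simp
next
  case False
  then have st: "s < t" using s by simp
  have meas[measurable]: "\<And>u. W u \<in> borel_measurable M" using bm unfolding std_brownian_motion_def by blast
  have D: "distributed M lborel (\<lambda>\<omega>. (W t \<omega> - W s \<omega>) $ i) (\<lambda>y. ennreal (normal_density 0 (sqrt (t - s)) y))" for i
  proof -
    have "sorted_wrt (<) [s, t] \<and> (\<forall>u\<in>set [s, t]. 0 \<le> u)" using st s by auto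
    with bm have "\<forall>j < length [s,t] - 1. \<forall>i.
           distributed M lborel (\<lambda>\<omega>. (W ([s,t] ! Suc j) \<omega> - W ([s,t] ! j) \<omega>) $ i)
             (\<lambda>y. ennreal (normal_density 0 (sqrt ([s,t] ! Suc j - [s,t] ! j)) y))"
      unfolding std_brownian_motion_def by blast
    from this[rule_format, of 0 i] show ?thesis by simp
  qed
  have "(\<integral>\<^sup>+\<omega>. ennreal ((norm (W t \<omega> - W s \<omega>))\<^sup>2) \<partial>M) = (\<integral>\<^sup>+\<omega>. (\<Sum>i\<in>UNIV. ennreal (((W t \<omega> - W s \<omega>)$i)\<^sup>2)) \<partial>M)"
    by (intro nn_integral_cong) (simp add: norm_sq_vec)
  also have "\<dots> = (\<Sum>i\<in>UNIV. (\<integral>\<^sup>+\<omega>. ennreal (((W t \<omega> - W s \<omega>)$i)\<^sup>2) \<partial>M))"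
    using distributed_measurable[OF D] by (intro nn_integral_sum) simp
  also have "\<dots> = (\<Sum>i\<in>(UNIV::'n set). ennreal (t - s))"
  proof (rule sum.cong[OF refl])
    fix i :: 'n
    have "(\<integral>\<^sup>+\<omega>. ennreal (((W t \<omega> - W s \<omega>)$i)\<^sup>2) \<partial>M) = (\<integral>\<^sup>+y. ennreal (normal_density 0 (sqrt (t - s)) y) * ennreal (y\<^sup>2) \<partial>lborel)"
      by (rule distributed_nn_integral[OF D, symmetric]) measurable
    also have "\<dots> = ennreal ((sqrt (t - s))\<^sup>2)" by (rule normal_second_nn) (use st in simp)
    finally show "(\<integral>\<^sup>+\<omega>. ennreal (((W t \<omega> - W s \<omega>)$i)\<^sup>2) \<partial>M) = ennreal (t - s)" using st by simp
  qed
  also have "\<dots> = ennreal (real CARD('n) * (t - s))"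
    by (subst ennreal_mult) (use st in \<open>auto simp: ennreal_of_nat_eq_real_of_nat\<close>)
  finally show ?thesis .
qed


lemma meas_vec_nth[measurable (raw)]:
  assumes "f \<in> borel_measurable M"
  shows "(\<lambda>x. (f x :: real^'n) $ i) \<in> borel_measurable M"
proof -
  have "(\<lambda>x. f x \<bullet> axis i 1) \<in> borel_measurable M" using assms by measurable
  then show ?thesis by (simp add: cart_eq_inner_axis)
qed

lemma hk_to_nn:
  fixes f F :: "real \<Rightarrow> real"
  assumes cf: "continuous_on {0..s} f" and nn: "\<And>r. r \<in> {0..s} \<Longrightarrow> 0 \<le> f r"
    and eqF: "\<And>r. r \<in> {0..s} \<Longrightarrow> F r = f r"
  shows "(\<integral>\<^sup>+r. ennreal (indicator {0..s} r * F r) \<partial>lborel) = ennreal (integral {0..s} f)"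
proof -
  have "(\<integral>\<^sup>+r. ennreal (indicator {0..s} r * F r) \<partial>lborel) = (\<integral>\<^sup>+r. ennreal (indicator {0..s} r * f r) \<partial>lborel)"
    by (intro nn_integral_cong) (auto simp: indicator_def eqF)
  also have "\<dots> = ennreal (integral {0..s} f)"
    by (rule nn_integral_has_integral_lebesgue[OF nn]) (auto intro: integrable_integral integrable_continuous_interval cf)
  finally show ?thesis .
qed

lemma sq2: "(norm (a + b :: 'a::real_normed_vector))\<^sup>2 \<le> 2 * ((norm a)\<^sup>2 + (norm b)\<^sup>2)"
proof -
  have "norm (a + b) \<le> norm a + norm b" by (rule norm_triangle_ineq)
  then have "(norm (a + b))\<^sup>2 \<le> (norm a + norm b)\<^sup>2" by (simp add: power_mono)
  also have "\<dots> \<le> 2 * ((norm a)\<^sup>2 + (norm b)\<^sup>2)"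
    using sum_squares_bound[of "norm a" "norm b"] by (simp add: power2_eq_square algebra_simps)
  finally show ?thesis .
qed

lemma sq3: "(norm (a + b + c :: 'a::real_normed_vector))\<^sup>2 \<le> 3 * ((norm a)\<^sup>2 + (norm b)\<^sup>2 + (norm c)\<^sup>2)"
proof -
  have "norm (a + b + c) \<le> norm a + norm b + norm c"
    using norm_triangle_ineq[of "a+b" c] norm_triangle_ineq[of a b] by linarith
  then have "(norm (a + b + c))\<^sup>2 \<le> (norm a + norm b + norm c)\<^sup>2" by (simp add: power_mono)
  also have "\<dots> \<le> 3 * ((norm a)\<^sup>2 + (norm b)\<^sup>2 + (norm c)\<^sup>2)"
  proof -
    have "0 \<le> (norm a - norm b)\<^sup>2 + (norm b - norm c)\<^sup>2 + (norm a - norm c)\<^sup>2" by simp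
    then show ?thesis by (simp add: power2_eq_square algebra_simps)
  qed
  finally show ?thesis .
qed


lemma lin_aux: "(v::real) \<le> 3*(a + b + c) \<Longrightarrow> a \<le> a' \<Longrightarrow> b \<le> b' \<Longrightarrow> c = q \<Longrightarrow> q \<le> q' \<Longrightarrow> L = 3*q' \<Longrightarrow> v \<le> 3*a' + 3*b' + L"
  by (smt (verit))

lemma path_bound:
  fixes Vf bf Wf :: "real \<Rightarrow> real^'n" and \<epsilon> s B :: real
  assumes ep: "\<epsilon> > 0" and s: "s \<ge> 0"
    and cV: "continuous_on {0..s} Vf" and cb: "continuous_on {0..s} bf" and cW: "continuous_on {0..s} Wf"
    and W0: "Wf 0 = 0"
    and eq: "\<And>u. 0 \<le> u \<Longrightarrow> u \<le> s \<Longrightarrow> Vf u = Vf 0 + integral {0..u} (\<lambda>r. (1/\<epsilon>) *\<^sub>R (bf r - Vf r)) + sqrt (2/\<epsilon>) *\<^sub>R Wf u"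
    and bB: "\<And>u. u \<in> {0..s} \<Longrightarrow> norm (bf u) \<le> B"
  shows "(norm (Vf s))\<^sup>2 \<le> 3 * (norm (Vf 0))\<^sup>2 + 3 * B\<^sup>2 + 3 * (2/\<epsilon>) * (2 * exp (- (2 * s/\<epsilon>)) * (norm (Wf s))\<^sup>2
            + 2 * integral {0..s} (\<lambda>r. (1/\<epsilon>) * exp (-(s-r)/\<epsilon>) * (norm (Wf s - Wf r))\<^sup>2))"
proof -
  define \<sigma> where "\<sigma> = sqrt (2/\<epsilon>)"
  define k where "k r = exp (-(s-r)/\<epsilon>)" for r
  define w where "w r = (1/\<epsilon>) * k r" for r
  define e where "e = exp (-s/\<epsilon>)"
  have ck: "continuous_on {0..s} k" unfolding k_def using ep by (intro continuous_intros) auto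
  have cw: "continuous_on {0..s} w" unfolding w_def by (intro continuous_intros ck)
  have ode: "Vf s = e *\<^sub>R Vf 0 + (1/\<epsilon>) *\<^sub>R integral {0..s} (\<lambda>r. k r *\<^sub>R (bf r - \<sigma> *\<^sub>R Wf r)) + \<sigma> *\<^sub>R Wf s"
    unfolding e_def k_def \<sigma>_def by (rule ode_solution[OF ep s cV cb cW W0 eq])
  have i_kb: "(\<lambda>r. k r *\<^sub>R bf r) integrable_on {0..s}"
    by (intro integrable_continuous_interval continuous_intros ck cb)
  have i_kW: "(\<lambda>r. k r *\<^sub>R Wf r) integrable_on {0..s}"
    by (intro integrable_continuous_interval continuous_intros ck cW)
  have i_kWs: "(\<lambda>r. k r *\<^sub>R Wf s) integrable_on {0..s}"
    by (intro integrable_continuous_interval continuous_intros ck)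
  have i_kWd: "(\<lambda>r. k r *\<^sub>R (Wf s - Wf r)) integrable_on {0..s}"
    by (intro integrable_continuous_interval continuous_intros ck cW)
  have intk: "integral {0..s} k = \<epsilon> - \<epsilon> * e"
    unfolding k_def e_def by (rule integral_unique[OF kern_int[OF ep s]])
  have I1: "integral {0..s} (\<lambda>r. k r *\<^sub>R (bf r - \<sigma> *\<^sub>R Wf r)) = integral {0..s} (\<lambda>r. k r *\<^sub>R bf r) - \<sigma> *\<^sub>R integral {0..s} (\<lambda>r. k r *\<^sub>R Wf r)"
  proof -
    have "integral {0..s} (\<lambda>r. k r *\<^sub>R (bf r - \<sigma> *\<^sub>R Wf r)) = integral {0..s} (\<lambda>r. k r *\<^sub>R bf r - \<sigma> *\<^sub>R (k r *\<^sub>R Wf r))"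
      by (simp add: algebra_simps)
    also have "\<dots> = integral {0..s} (\<lambda>r. k r *\<^sub>R bf r) - integral {0..s} (\<lambda>r. \<sigma> *\<^sub>R (k r *\<^sub>R Wf r))"
      by (intro integral_diff i_kb integrable_continuous_interval continuous_intros ck cW)
    also have "integral {0..s} (\<lambda>r. \<sigma> *\<^sub>R (k r *\<^sub>R Wf r)) = \<sigma> *\<^sub>R integral {0..s} (\<lambda>r. k r *\<^sub>R Wf r)"
      by (rule integral_cmul)
    finally show ?thesis .
  qed
  have I2: "integral {0..s} (\<lambda>r. k r *\<^sub>R Wf r) = (\<epsilon> - \<epsilon> * e) *\<^sub>R Wf s - integral {0..s} (\<lambda>r. k r *\<^sub>R (Wf s - Wf r))"
  proof -
    have "integral {0..s} (\<lambda>r. k r *\<^sub>R (Wf s - Wf r)) = integral {0..s} (\<lambda>r. k r *\<^sub>R Wf s - k r *\<^sub>R Wf r)"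
      by (simp add: algebra_simps)
    also have "\<dots> = integral {0..s} (\<lambda>r. k r *\<^sub>R Wf s) - integral {0..s} (\<lambda>r. k r *\<^sub>R Wf r)"
      by (intro integral_diff i_kWs i_kW)
    also have "integral {0..s} (\<lambda>r. k r *\<^sub>R Wf s) = (\<epsilon> - \<epsilon> * e) *\<^sub>R Wf s"
    proof -
      have "(k has_integral (\<epsilon> - \<epsilon> * e)) {0..s}" unfolding k_def e_def by (rule kern_int[OF ep s])
      from has_integral_scaleR_left[OF this, of "Wf s"] show ?thesis by (rule integral_unique)
    qed
    finally show ?thesis by simp
  qed
  define A where "A = (1/\<epsilon>) *\<^sub>R integral {0..s} (\<lambda>r. k r *\<^sub>R bf r)"
  define D where "D = integral {0..s} (\<lambda>r. w r *\<^sub>R (Wf s - Wf r))"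
  have DD: "D = (1/\<epsilon>) *\<^sub>R integral {0..s} (\<lambda>r. k r *\<^sub>R (Wf s - Wf r))"
    unfolding D_def w_def by (simp add: integral_cmul[symmetric])
  have vec_id: "(1/\<epsilon>) *\<^sub>R (Ib - \<sigma> *\<^sub>R ((\<epsilon> - \<epsilon> * e) *\<^sub>R Ws - Id)) + \<sigma> *\<^sub>R Ws
      = (1/\<epsilon>) *\<^sub>R Ib + \<sigma> *\<^sub>R (e *\<^sub>R Ws + (1/\<epsilon>) *\<^sub>R Id)" for Ib Ws Id :: "real^'n"
  proof -
    have f: "(1/\<epsilon>) * (\<sigma> * (\<epsilon> - \<epsilon> * e)) = \<sigma> - \<sigma> * e" using ep by (simp add: field_simps)
    have "(1/\<epsilon>) *\<^sub>R (Ib - \<sigma> *\<^sub>R ((\<epsilon> - \<epsilon> * e) *\<^sub>R Ws - Id))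
        = (1/\<epsilon>) *\<^sub>R Ib - ((1/\<epsilon>) * (\<sigma> * (\<epsilon> - \<epsilon> * e))) *\<^sub>R Ws + ((1/\<epsilon>) * \<sigma>) *\<^sub>R Id"
      by (simp only: scaleR_diff_right scaleR_scaleR diff_diff_eq2 add_diff_eq) (simp add: scaleR_add_right algebra_simps)
    also have "\<dots> = (1/\<epsilon>) *\<^sub>R Ib - (\<sigma> - \<sigma> * e) *\<^sub>R Ws + ((1/\<epsilon>) * \<sigma>) *\<^sub>R Id"
      by (simp only: f)
    finally show ?thesis by (simp add: algebra_simps)
  qed
  have rep: "Vf s = e *\<^sub>R Vf 0 + A + \<sigma> *\<^sub>R (e *\<^sub>R Wf s + D)"
    unfolding A_def DD ode I1 I2
    using vec_id by (simp add: algebra_simps)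
  have e01: "0 \<le> e" "e \<le> 1" unfolding e_def using ep s by auto
  have nA: "norm A \<le> B"
  proof -
    have "norm (integral {0..s} (\<lambda>r. k r *\<^sub>R bf r)) \<le> integral {0..s} (\<lambda>r. k r * B)"
    proof (rule integral_norm_bound_integral[OF i_kb])
      show "(\<lambda>r. k r * B) integrable_on {0..s}" by (intro integrable_continuous_interval continuous_intros ck)
      fix r assume r: "r \<in> {0..s}"
      have "norm (k r *\<^sub>R bf r) = k r * norm (bf r)" unfolding k_def by simp
      also have "\<dots> \<le> k r * B" unfolding k_def by (intro mult_left_mono bB r) simp
      finally show "norm (k r *\<^sub>R bf r) \<le> k r * B" .
    qed
    also have "\<dots> = (\<epsilon> - \<epsilon> * e) * B" using intk by simp
    also have "\<dots> \<le> \<epsilon> * B"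
    proof -
      have "0 \<le> B" using bB[of 0] s by (meson atLeastAtMost_iff norm_ge_zero order_trans order_refl)
      then show ?thesis using ep e01 by (simp add: mult_right_mono)
    qed
    finally have "norm (integral {0..s} (\<lambda>r. k r *\<^sub>R bf r)) \<le> \<epsilon> * B" .
    then show ?thesis unfolding A_def using ep by (simp add: field_simps)
  qed
  have intw: "integral {0..s} w \<le> 1"
  proof -
    have "integral {0..s} w = (1/\<epsilon>) * integral {0..s} k" unfolding w_def by simp
    also have "\<dots> = 1 - e" using intk ep by (simp add: field_simps)
    finally show ?thesis using e01 by simp
  qed
  have nD: "(norm D)\<^sup>2 \<le> integral {0..s} (\<lambda>r. w r * (norm (Wf s - Wf r))\<^sup>2)"
    unfolding D_def
    by (rule jensen_int[OF cw _ _ intw]) (use ep in \<open>auto intro!: continuous_intros cW simp: w_def k_def\<close>)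
  have a1: "(norm (Vf s))\<^sup>2 \<le> 3 * ((norm (e *\<^sub>R Vf 0))\<^sup>2 + (norm A)\<^sup>2 + (norm (\<sigma> *\<^sub>R (e *\<^sub>R Wf s + D)))\<^sup>2)"
    unfolding rep by (rule sq3)
  have x1: "(norm (e *\<^sub>R Vf 0))\<^sup>2 \<le> (norm (Vf 0))\<^sup>2"
  proof -
    have "norm (e *\<^sub>R Vf 0) \<le> norm (Vf 0)" using e01 by (simp add: mult_left_le_one_le)
    then show ?thesis by (simp add: power_mono)
  qed
  have x2: "(norm A)\<^sup>2 \<le> B\<^sup>2" using nA by (simp add: power_mono)
  have x3: "(norm (\<sigma> *\<^sub>R (e *\<^sub>R Wf s + D)))\<^sup>2 = (2/\<epsilon>) * (norm (e *\<^sub>R Wf s + D))\<^sup>2"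
    unfolding \<sigma>_def using ep by (simp add: power_mult_distrib)
  have z: "(norm (e *\<^sub>R Wf s))\<^sup>2 = exp (- (2 * s/\<epsilon>)) * (norm (Wf s))\<^sup>2"
  proof -
    have "e\<^sup>2 = exp (- (2 * s/\<epsilon>))" unfolding e_def by (simp add: power2_eq_square exp_add[symmetric])
    then show ?thesis using e01 by (simp add: power_mult_distrib)
  qed
  define J where "J = integral {0..s} (\<lambda>r. (1/\<epsilon>) * exp (-(s-r)/\<epsilon>) * (norm (Wf s - Wf r))\<^sup>2)"
  have nD': "(norm D)\<^sup>2 \<le> J" using nD unfolding J_def w_def k_def by simp
  have "(norm (e *\<^sub>R Wf s + D))\<^sup>2 \<le> 2 * (exp (- (2 * s/\<epsilon>)) * (norm (Wf s))\<^sup>2) + 2 * J"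
  proof -
    have "(norm (e *\<^sub>R Wf s + D))\<^sup>2 \<le> 2 * ((norm (e *\<^sub>R Wf s))\<^sup>2 + (norm D)\<^sup>2)" by (rule sq2)
    also have "\<dots> \<le> 2 * (exp (- (2 * s/\<epsilon>)) * (norm (Wf s))\<^sup>2 + J)" unfolding z using nD' by simp
    finally show ?thesis by simp
  qed
  then have qq: "(2/\<epsilon>) * (norm (e *\<^sub>R Wf s + D))\<^sup>2 \<le> (2/\<epsilon>) * (2 * (exp (- (2 * s/\<epsilon>)) * (norm (Wf s))\<^sup>2) + 2 * J)"
    by (rule mult_left_mono) (use ep in simp)
  have L: "3 * (2/\<epsilon>) * (2 * exp (- (2 * s/\<epsilon>)) * (norm (Wf s))\<^sup>2 + 2 * J) = 3 * ((2/\<epsilon>) * (2 * (exp (- (2 * s/\<epsilon>)) * (norm (Wf s))\<^sup>2) + 2 * J))"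
    by (simp add: algebra_simps)
  have "(norm (Vf s))\<^sup>2 \<le> 3 * (norm (Vf 0))\<^sup>2 + 3 * B\<^sup>2 + 3 * (2/\<epsilon>) * (2 * exp (- (2 * s/\<epsilon>)) * (norm (Wf s))\<^sup>2 + 2 * J)"
    by (rule lin_aux[OF a1 x1 x2 x3 qq L])
  then show ?thesis unfolding J_def .
qed


lemma carath_meas':
  fixes f :: "real \<Rightarrow> 'a \<Rightarrow> 'b::{metric_space, second_countable_topology}"
  assumes "\<And>s. s \<ge> 0 \<Longrightarrow> f s \<in> borel_measurable M"
    and "\<And>\<omega>. \<omega> \<in> space M \<Longrightarrow> continuous_on {0..} (\<lambda>s. f s \<omega>)"
  shows "(\<lambda>z. f (max 0 (snd z)) (fst z)) \<in> borel_measurable (M \<Otimes>\<^sub>M lborel)"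
  using measurable_pair_swap[OF carath_meas[OF assms]] by (simp add: case_prod_beta')

lemma sq_le_powr: "0 \<le> (r::real) \<Longrightarrow> 2 \<le> p \<Longrightarrow> r\<^sup>2 \<le> 1 + r powr p"
proof -
  assume r: "0 \<le> r" and p: "2 \<le> p"
  show ?thesis
  proof (cases "r \<le> 1")
    case True
    then have "r\<^sup>2 \<le> 1" using r by (simp add: power_le_one)
    moreover have "0 \<le> r powr p" by simp
    ultimately show ?thesis by linarith
  next
    case False
    then have "r\<^sup>2 = r powr 2" by (simp add: powr_numeral)
    also have "\<dots> \<le> r powr p" using False p by (intro powr_mono) auto
    finally show ?thesis by simp
  qed
qed

lemma xexp_le: "0 \<le> (x::real) \<Longrightarrow> x * exp (- x) \<le> 1"
proof -
  assume "0 \<le> x"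
  have "x \<le> exp x" using exp_ge_add_one_self[of x] by linarith
  then show ?thesis by (simp add: exp_minus field_simps)
qed

lemma ennr4: "0\<le>a \<Longrightarrow> 0\<le>d \<Longrightarrow> 0\<le>g \<Longrightarrow> 0\<le>x \<Longrightarrow> 0\<le>c \<Longrightarrow> 0\<le>y \<Longrightarrow>
  ennreal 3 * ennreal a + ennreal d + ennreal g * ennreal x + ennreal c * ennreal y = ennreal (3*a + d + g*x + c*y)"
proof -
  assume h: "0\<le>a" "0\<le>d" "0\<le>g" "0\<le>x" "0\<le>c" "0\<le>y"
  have "ennreal (3*a + d + g*x + c*y) = ennreal (3*a + d + g*x) + ennreal (c*y)" using h by (intro ennreal_plus) auto
  also have "ennreal (3*a + d + g*x) = ennreal (3*a + d) + ennreal (g*x)" using h by (intro ennreal_plus) auto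
  also have "ennreal (3*a + d) = ennreal (3*a) + ennreal d" using h by (intro ennreal_plus) auto
  also have "ennreal (3*a) = ennreal 3 * ennreal a" using h by (intro ennreal_mult) auto
  also have "ennreal (g*x) = ennreal g * ennreal x" using h by (intro ennreal_mult) auto
  also have "ennreal (c*y) = ennreal c * ennreal y" using h by (intro ennreal_mult) auto
  finally show ?thesis by simp
qed

lemma vmom:
  fixes W X V :: "real \<Rightarrow> 'a \<Rightarrow> real^'n" and b :: "(real^'n) \<times> real \<Rightarrow> real^'n"
  assumes bm: "std_brownian_motion M W" and ep: "\<epsilon> > 0" and p: "p \<ge> 2"
    and V0m: "V 0 \<in> borel_measurable M"
    and Vpi: "integrable M (\<lambda>\<omega>. norm (V 0 \<omega> - c) powr p)"
    and Vpb: "integral\<^sup>L M (\<lambda>\<omega>. norm (V 0 \<omega> - c) powr p) \<le> Mp"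
    and B0: "B \<ge> 0" and Bc: "norm c \<le> B" and Bb: "\<And>z. snd z \<ge> 0 \<Longrightarrow> norm (b z) \<le> B"
    and cb: "continuous_on UNIV b"
    and path: "\<And>\<omega>. \<omega> \<in> space M \<Longrightarrow> continuous_on {0..} (\<lambda>t. X t \<omega>) \<and> continuous_on {0..} (\<lambda>t. V t \<omega>) \<and>
       (\<forall>t\<ge>0. V t \<omega> = V 0 \<omega> + integral {0..t} (\<lambda>s. (1 / \<epsilon>) *\<^sub>R (b (X s \<omega>, s) - V s \<omega>)) + sqrt (2 / \<epsilon>) *\<^sub>R W t \<omega>)"
    and s: "s \<ge> 0"
  shows "(\<integral>\<^sup>+\<omega>. ennreal ((norm (V s \<omega>))\<^sup>2) \<partial>M) \<le> ennreal (9 * B\<^sup>2 + 6 + 6 * Mp + 18 * real CARD('n))"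
proof -
  let ?N = "real CARD('n)"
  have ps: "prob_space M" using bm unfolding std_brownian_motion_def by blast
  interpret prob_space M by (rule ps)
  have Wm[measurable]: "\<And>u. W u \<in> borel_measurable M" using bm unfolding std_brownian_motion_def by blast
  have Wc: "\<And>\<omega>. \<omega> \<in> space M \<Longrightarrow> W 0 \<omega> = 0 \<and> continuous_on {0..} (\<lambda>t. W t \<omega>)"
    using bm unfolding std_brownian_motion_def by blast
  note [measurable] = V0m
  have WJ[measurable]: "(\<lambda>z. W (max 0 (snd z)) (fst z)) \<in> borel_measurable (M \<Otimes>\<^sub>M lborel)"
    by (rule carath_meas') (use Wc in auto)
  define w where "w r = (1/\<epsilon>) * exp (-(s-r)/\<epsilon>)" for r
  define F where "F \<omega> r = ennreal (indicator {0..s} r * (w r * (norm (W s \<omega> - W (max 0 r) \<omega>))\<^sup>2))" for \<omega> r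
  define Jn where "Jn \<omega> = (\<integral>\<^sup>+r. F \<omega> r \<partial>lborel)" for \<omega>
  define \<gamma> where "\<gamma> = 3 * (2/\<epsilon>) * (2 * exp (- (2 * s/\<epsilon>)))"
  define c2 where "c2 = 3 * (2/\<epsilon>) * 2"
  have \<gamma>0: "\<gamma> \<ge> 0" and c20: "c2 \<ge> 0" unfolding \<gamma>_def c2_def using ep by auto
  have pw: "ennreal ((norm (V s \<omega>))\<^sup>2) \<le> ennreal 3 * ennreal ((norm (V 0 \<omega>))\<^sup>2) + ennreal (3 * B\<^sup>2)
      + ennreal \<gamma> * ennreal ((norm (W s \<omega>))\<^sup>2) + ennreal c2 * Jn \<omega>" if om: "\<omega> \<in> space M" for \<omega>
  proof -
    have pth: "continuous_on {0..} (\<lambda>t. X t \<omega>)" "continuous_on {0..} (\<lambda>t. V t \<omega>)"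
      "\<And>t. t \<ge> 0 \<Longrightarrow> V t \<omega> = V 0 \<omega> + integral {0..t} (\<lambda>s. (1 / \<epsilon>) *\<^sub>R (b (X s \<omega>, s) - V s \<omega>)) + sqrt (2 / \<epsilon>) *\<^sub>R W t \<omega>"
      using path[OF om] by blast+
    have sub: "{0..s} \<subseteq> {0::real..}" by auto
    have cV: "continuous_on {0..s} (\<lambda>t. V t \<omega>)" by (rule continuous_on_subset[OF pth(2) sub])
    have cX: "continuous_on {0..s} (\<lambda>t. X t \<omega>)" by (rule continuous_on_subset[OF pth(1) sub])
    have cW: "continuous_on {0..s} (\<lambda>t. W t \<omega>)" by (rule continuous_on_subset[OF conjunct2[OF Wc[OF om]] sub])
    have cbf: "continuous_on {0..s} (\<lambda>u. b (X u \<omega>, u))"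
      by (rule continuous_on_compose2[OF cb, where f="\<lambda>u. (X u \<omega>, u)"]) (auto intro!: continuous_intros cX)
    have pb: "(norm (V s \<omega>))\<^sup>2 \<le> 3 * (norm (V 0 \<omega>))\<^sup>2 + 3 * B\<^sup>2 + 3 * (2/\<epsilon>) * (2 * exp (- (2 * s/\<epsilon>)) * (norm (W s \<omega>))\<^sup>2
            + 2 * integral {0..s} (\<lambda>r. (1/\<epsilon>) * exp (-(s-r)/\<epsilon>) * (norm (W s \<omega> - W r \<omega>))\<^sup>2))"
      by (rule path_bound[OF ep s cV cbf cW conjunct1[OF Wc[OF om]] pth(3) Bb]) auto
    define J where "J = integral {0..s} (\<lambda>r. (1/\<epsilon>) * exp (-(s-r)/\<epsilon>) * (norm (W s \<omega> - W r \<omega>))\<^sup>2)"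
    have J0: "J \<ge> 0" unfolding J_def
      by (intro integral_nonneg integrable_continuous_interval continuous_intros cW) (use ep in auto)
    have JJ: "ennreal J = Jn \<omega>"
      unfolding Jn_def F_def J_def
      by (rule hk_to_nn[symmetric]) (use ep in \<open>auto intro!: continuous_intros cW simp: w_def\<close>)
    have "(norm (V s \<omega>))\<^sup>2 \<le> 3 * (norm (V 0 \<omega>))\<^sup>2 + 3 * B\<^sup>2 + \<gamma> * (norm (W s \<omega>))\<^sup>2 + c2 * J"
      using pb unfolding J_def[symmetric] \<gamma>_def c2_def by (simp add: algebra_simps)
    then have "ennreal ((norm (V s \<omega>))\<^sup>2) \<le> ennreal (3 * (norm (V 0 \<omega>))\<^sup>2 + 3 * B\<^sup>2 + \<gamma> * (norm (W s \<omega>))\<^sup>2 + c2 * J)"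
      by (rule ennreal_leI)
    also have "\<dots> = ennreal 3 * ennreal ((norm (V 0 \<omega>))\<^sup>2) + ennreal (3 * B\<^sup>2) + ennreal \<gamma> * ennreal ((norm (W s \<omega>))\<^sup>2) + ennreal c2 * ennreal J"
      using \<gamma>0 c20 J0 by (simp add: ennreal_plus ennreal_mult)
    finally show ?thesis unfolding JJ .
  qed
  have "0 \<le> integral\<^sup>L M (\<lambda>\<omega>. norm (V 0 \<omega> - c) powr p)" by (intro integral_nonneg_AE) simp
  then have Mp0: "Mp \<ge> 0" using Vpb by linarith
  have Fm: "(\<lambda>(\<omega>, r). F \<omega> r) \<in> borel_measurable (M \<Otimes>\<^sub>M lborel)"
    unfolding F_def w_def by measurable
  have Jnm[measurable]: "Jn \<in> borel_measurable M"
    unfolding Jn_def by (rule lborel.borel_measurable_nn_integral[OF Fm])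
  have "(\<integral>\<^sup>+\<omega>. ennreal ((norm (V s \<omega>))\<^sup>2) \<partial>M) \<le> (\<integral>\<^sup>+\<omega>. ennreal 3 * ennreal ((norm (V 0 \<omega>))\<^sup>2) + ennreal (3 * B\<^sup>2)
      + ennreal \<gamma> * ennreal ((norm (W s \<omega>))\<^sup>2) + ennreal c2 * Jn \<omega> \<partial>M)"
    by (rule nn_integral_mono) (rule pw)
  also have "\<dots> = ennreal 3 * (\<integral>\<^sup>+\<omega>. ennreal ((norm (V 0 \<omega>))\<^sup>2) \<partial>M) + ennreal (3 * B\<^sup>2)
      + ennreal \<gamma> * (\<integral>\<^sup>+\<omega>. ennreal ((norm (W s \<omega>))\<^sup>2) \<partial>M) + ennreal c2 * (\<integral>\<^sup>+\<omega>. Jn \<omega> \<partial>M)"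
    by (simp add: nn_integral_add nn_integral_cmult emeasure_space_1)
  finally have tot: "(\<integral>\<^sup>+\<omega>. ennreal ((norm (V s \<omega>))\<^sup>2) \<partial>M) \<le> ennreal 3 * (\<integral>\<^sup>+\<omega>. ennreal ((norm (V 0 \<omega>))\<^sup>2) \<partial>M) + ennreal (3 * B\<^sup>2)
      + ennreal \<gamma> * (\<integral>\<^sup>+\<omega>. ennreal ((norm (W s \<omega>))\<^sup>2) \<partial>M) + ennreal c2 * (\<integral>\<^sup>+\<omega>. Jn \<omega> \<partial>M)" .
  have A1: "(\<integral>\<^sup>+\<omega>. ennreal ((norm (V 0 \<omega>))\<^sup>2) \<partial>M) \<le> ennreal (2 * B\<^sup>2 + 2 + 2 * Mp)"
  proof -
    let ?Y = "\<lambda>\<omega>. norm (V 0 \<omega> - c) powr p"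
    have "(\<integral>\<^sup>+\<omega>. ennreal ((norm (V 0 \<omega>))\<^sup>2) \<partial>M) \<le> (\<integral>\<^sup>+\<omega>. ennreal (2 * (1 + ?Y \<omega>) + 2 * B\<^sup>2) \<partial>M)"
    proof (rule nn_integral_mono, rule ennreal_leI)
      fix \<omega>
      have "(norm (V 0 \<omega>))\<^sup>2 = (norm ((V 0 \<omega> - c) + c))\<^sup>2" by simp
      also have "\<dots> \<le> 2 * ((norm (V 0 \<omega> - c))\<^sup>2 + (norm c)\<^sup>2)" by (rule sq2)
      also have "(norm (V 0 \<omega> - c))\<^sup>2 \<le> 1 + ?Y \<omega>" by (rule sq_le_powr[OF norm_ge_zero p])
      also have "(norm c)\<^sup>2 \<le> B\<^sup>2" using Bc by (simp add: power_mono)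
      finally show "(norm (V 0 \<omega>))\<^sup>2 \<le> 2 * (1 + ?Y \<omega>) + 2 * B\<^sup>2" by simp
    qed
    also have "\<dots> = ennreal (integral\<^sup>L M (\<lambda>\<omega>. 2 * (1 + ?Y \<omega>) + 2 * B\<^sup>2))"
      by (rule nn_integral_eq_integral) (use Vpi in auto)
    also have "integral\<^sup>L M (\<lambda>\<omega>. 2 * (1 + ?Y \<omega>) + 2 * B\<^sup>2) = 2 + 2 * integral\<^sup>L M ?Y + 2 * B\<^sup>2"
      using Vpi by (simp add: prob_space)
    also have "ennreal (2 + 2 * integral\<^sup>L M ?Y + 2 * B\<^sup>2) \<le> ennreal (2 * B\<^sup>2 + 2 + 2 * Mp)"
      using Vpb by (intro ennreal_leI) linarith
    finally show ?thesis .
  qed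
  have A2: "(\<integral>\<^sup>+\<omega>. ennreal ((norm (W s \<omega>))\<^sup>2) \<partial>M) = ennreal (?N * s)"
  proof -
    have "(\<integral>\<^sup>+\<omega>. ennreal ((norm (W s \<omega>))\<^sup>2) \<partial>M) = (\<integral>\<^sup>+\<omega>. ennreal ((norm (W s \<omega> - W 0 \<omega>))\<^sup>2) \<partial>M)"
      by (rule nn_integral_cong) (use Wc in simp)
    also have "\<dots> = ennreal (?N * (s - 0))" by (rule bm_second_moment[OF bm order_refl s])
    finally show ?thesis by simp
  qed
  have AJ: "(\<integral>\<^sup>+\<omega>. Jn \<omega> \<partial>M) \<le> ennreal (?N * \<epsilon>)"
  proof -
    interpret pf: pair_sigma_finite lborel M
      by (simp add: pair_sigma_finite_def lborel.sigma_finite_measure_axioms sigma_finite_measure_axioms)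
    have Fm': "(\<lambda>(r, \<omega>). F \<omega> r) \<in> borel_measurable (lborel \<Otimes>\<^sub>M M)"
      using measurable_pair_swap[OF Fm] by (simp add: case_prod_beta')
    have "(\<integral>\<^sup>+\<omega>. Jn \<omega> \<partial>M) = (\<integral>\<^sup>+\<omega>. (\<integral>\<^sup>+r. F \<omega> r \<partial>lborel) \<partial>M)" unfolding Jn_def ..
    also have "\<dots> = (\<integral>\<^sup>+r. (\<integral>\<^sup>+\<omega>. F \<omega> r \<partial>M) \<partial>lborel)"
      by (rule pf.Fubini'[of "\<lambda>r \<omega>. F \<omega> r"]) (use Fm' in simp)
    also have "\<dots> = (\<integral>\<^sup>+r. ennreal (indicator {0..s} r * (w r * (?N * (s - r)))) \<partial>lborel)"
    proof (rule nn_integral_cong)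
      fix r :: real
      show "(\<integral>\<^sup>+\<omega>. F \<omega> r \<partial>M) = ennreal (indicator {0..s} r * (w r * (?N * (s - r))))"
      proof (cases "r \<in> {0..s}")
        case True
        then have r: "0 \<le> r" "r \<le> s" by auto
        have w0: "0 \<le> w r" unfolding w_def using ep by simp
        have "(\<integral>\<^sup>+\<omega>. F \<omega> r \<partial>M) = (\<integral>\<^sup>+\<omega>. ennreal (w r) * ennreal ((norm (W s \<omega> - W r \<omega>))\<^sup>2) \<partial>M)"
          unfolding F_def using True r w0 by (intro nn_integral_cong) (simp add: ennreal_mult max_def)
        also have "\<dots> = ennreal (w r) * (\<integral>\<^sup>+\<omega>. ennreal ((norm (W s \<omega> - W r \<omega>))\<^sup>2) \<partial>M)"
          by (rule nn_integral_cmult) measurable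
        also have "\<dots> = ennreal (w r) * ennreal (?N * (s - r))"
          by (simp only: bm_second_moment[OF bm r])
        also have "\<dots> = ennreal (indicator {0..s} r * (w r * (?N * (s - r))))"
          using True r w0 by (simp add: ennreal_mult)
        finally show ?thesis .
      next
        case False
        then show ?thesis unfolding F_def by simp
      qed
    qed
    also have "\<dots> = ennreal (integral {0..s} (\<lambda>r. w r * (?N * (s - r))))"
      by (rule hk_to_nn) (use ep in \<open>auto intro!: continuous_intros simp: w_def\<close>)
    also have "integral {0..s} (\<lambda>r. w r * (?N * (s - r))) = (?N / \<epsilon>) * integral {0..s} (\<lambda>r. exp (-(s-r)/\<epsilon>) * (s - r))"
    proof -
      have "(\<lambda>r. w r * (?N * (s - r))) = (\<lambda>r. (?N / \<epsilon>) * (exp (-(s-r)/\<epsilon>) * (s - r)))"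
        unfolding w_def by (auto simp: field_simps)
      then show ?thesis by simp
    qed
    also have "ennreal (?N / \<epsilon> * integral {0..s} (\<lambda>r. exp (-(s-r)/\<epsilon>) * (s - r))) \<le> ennreal (?N / \<epsilon> * \<epsilon>\<^sup>2)"
      by (intro ennreal_leI mult_left_mono kern_lin_le ep s) (use ep in simp)
    also have "?N / \<epsilon> * \<epsilon>\<^sup>2 = ?N * \<epsilon>" using ep by (simp add: power2_eq_square)
    finally show ?thesis .
  qed
  have g1: "\<gamma> * (?N * s) \<le> 6 * ?N"
  proof -
    have "\<gamma> * (?N * s) = 6 * ?N * ((2 * s/\<epsilon>) * exp (- (2 * s/\<epsilon>)))"
      unfolding \<gamma>_def using ep by (simp add: field_simps)
    also have "\<dots> \<le> 6 * ?N * 1"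
      by (intro mult_left_mono xexp_le) (use ep s in auto)
    finally show ?thesis by simp
  qed
  have g2: "c2 * (?N * \<epsilon>) = 12 * ?N" unfolding c2_def using ep by simp
  have "ennreal 3 * (\<integral>\<^sup>+\<omega>. ennreal ((norm (V 0 \<omega>))\<^sup>2) \<partial>M) + ennreal (3 * B\<^sup>2)
      + ennreal \<gamma> * (\<integral>\<^sup>+\<omega>. ennreal ((norm (W s \<omega>))\<^sup>2) \<partial>M) + ennreal c2 * (\<integral>\<^sup>+\<omega>. Jn \<omega> \<partial>M)
      \<le> ennreal 3 * ennreal (2 * B\<^sup>2 + 2 + 2 * Mp) + ennreal (3 * B\<^sup>2) + ennreal \<gamma> * ennreal (?N * s) + ennreal c2 * ennreal (?N * \<epsilon>)"
    unfolding A2 by (intro add_mono mult_left_mono A1 AJ order_refl) auto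
  also have "\<dots> = ennreal (3 * (2 * B\<^sup>2 + 2 + 2 * Mp) + 3 * B\<^sup>2 + \<gamma> * (?N * s) + c2 * (?N * \<epsilon>))"
    using Mp0 \<gamma>0 c20 ep s B0 by (intro ennr4) auto
  also have "\<dots> \<le> ennreal (9 * B\<^sup>2 + 6 + 6 * Mp + 18 * ?N)"
    using g1 g2 by (intro ennreal_leI) (smt (verit))
  finally show ?thesis using tot by (rule order_trans[rotated])
qed


lemma lin_le_powr: "0 \<le> (r::real) \<Longrightarrow> 1 \<le> p \<Longrightarrow> r \<le> 1 + r powr p"
proof -
  assume r: "0 \<le> r" and p: "1 \<le> p"
  show ?thesis
  proof (cases "r \<le> 1")
    case True
    moreover have "0 \<le> r powr p" by simp
    ultimately show ?thesis by linarith
  next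
    case False
    then have "r = r powr 1" by simp
    also have "\<dots> \<le> r powr p" using False p by (intro powr_mono) auto
    finally show ?thesis by simp
  qed
qed

lemma partR:
  fixes b :: "(real^'n) \<times> real \<Rightarrow> real^'n" and V :: "real \<Rightarrow> 'a \<Rightarrow> real^'n"
  assumes sb: "smooth_bounded_derivs b"
    and Bd: "\<forall>us z. set us \<subseteq> Basis \<and> length us \<le> 2 \<and> snd z \<ge> 0 \<longrightarrow> norm (iter_dd us b z) \<le> B"
    and B0: "B > 0" and ps: "prob_space M" and ep: "\<epsilon> > 0" and p: "p \<ge> 1"
    and V0m: "V 0 \<in> borel_measurable M"
    and Vi: "integrable M (\<lambda>\<omega>. V 0 \<omega> - b (x, 0))"
    and Vpi: "integrable M (\<lambda>\<omega>. norm (V 0 \<omega> - b (x, 0)) powr p)"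
    and Vpb: "integral\<^sup>L M (\<lambda>\<omega>. norm (V 0 \<omega> - b (x, 0)) powr p) \<le> Mp"
  shows "integrable M (\<lambda>\<omega>. norm ((\<epsilon> * exp (- t / \<epsilon>)) *\<^sub>R (iter_dd [(0, 1)] b (x, 0) + iter_dd [(V 0 \<omega>, 0)] b (x, 0)))) \<and>
     integral\<^sup>L M (\<lambda>\<omega>. norm ((\<epsilon> * exp (- t / \<epsilon>)) *\<^sub>R (iter_dd [(0, 1)] b (x, 0) + iter_dd [(V 0 \<omega>, 0)] b (x, 0))))
       \<le> (B + real CARD('n) * B * (1 + max 0 Mp + B)) * \<epsilon> * exp (- t / \<epsilon>)"
proof -
  interpret prob_space M by (rule ps)
  let ?N = "real CARD('n)"
  let ?a = "iter_dd [(0, 1)] b (x, 0)"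
  let ?y = "\<lambda>i. iter_dd [E i] b (x, 0)"
  define ce where "ce = \<epsilon> * exp (- t / \<epsilon>)"
  have ce0: "ce \<ge> 0" unfolding ce_def using ep by simp
  note [measurable] = V0m
  have na: "norm ?a \<le> B" using Bd[rule_format, of "[(0,1)]" "(x,0)"] T_Basis by simp
  have ny: "norm (?y i) \<le> B" for i using Bd[rule_format, of "[E i]" "(x,0)"] E_Basis[of i] by simp
  have nb: "norm (b (x, 0)) \<le> B" using Bd[rule_format, of "[]" "(x,0)"] by simp
  have R_eq: "(\<lambda>\<omega>. ce *\<^sub>R (?a + iter_dd [(V 0 \<omega>, 0)] b (x, 0))) = (\<lambda>\<omega>. ce *\<^sub>R (?a + (\<Sum>i\<in>UNIV. (V 0 \<omega>)$i *\<^sub>R ?y i)))"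
  proof (rule ext)
    fix \<omega>
    show "ce *\<^sub>R (?a + iter_dd [(V 0 \<omega>, 0)] b (x, 0)) = ce *\<^sub>R (?a + (\<Sum>i\<in>UNIV. (V 0 \<omega>)$i *\<^sub>R ?y i))"
      by (simp only: dd1[OF sb, of "V 0 \<omega>"])
  qed
  have R_eq': "iter_dd [(V 0 \<omega>, 0)] b (x, 0) = (\<Sum>i\<in>UNIV. (V 0 \<omega>)$i *\<^sub>R ?y i)" for \<omega>
    by (simp only: dd1[OF sb, of "V 0 \<omega>"])
  have Rm: "(\<lambda>\<omega>. norm (ce *\<^sub>R (?a + iter_dd [(V 0 \<omega>, 0)] b (x, 0)))) \<in> borel_measurable M"
    unfolding R_eq' by measurable
  define G where "G \<omega> = ce * (B + ?N * B * (norm (V 0 \<omega> - b (x, 0)) + B))" for \<omega>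
  have Gi: "integrable M G" unfolding G_def using Vi by simp
  have bnd: "norm (ce *\<^sub>R (?a + iter_dd [(V 0 \<omega>, 0)] b (x, 0))) \<le> G \<omega>" for \<omega>
  proof -
    have "norm (iter_dd [(V 0 \<omega>, 0)] b (x, 0)) \<le> ?N * norm (V 0 \<omega>) * B"
      unfolding dd1[OF sb, of "V 0 \<omega>"] by (rule norm_lin_bound[OF ny])
    also have "norm (V 0 \<omega>) \<le> norm (V 0 \<omega> - b (x, 0)) + B"
      using norm_triangle_ineq[of "V 0 \<omega> - b (x, 0)" "b (x, 0)"] nb by simp
    finally have "norm (iter_dd [(V 0 \<omega>, 0)] b (x, 0)) \<le> ?N * (norm (V 0 \<omega> - b (x, 0)) + B) * B"
      using B0 by (simp add: mult_right_mono)
    then have "norm (?a + iter_dd [(V 0 \<omega>, 0)] b (x, 0)) \<le> B + ?N * B * (norm (V 0 \<omega> - b (x, 0)) + B)"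
      using norm_triangle_ineq[of ?a "iter_dd [(V 0 \<omega>, 0)] b (x, 0)"] na by (simp add: algebra_simps)
    then show ?thesis unfolding G_def using ce0 by (simp add: mult_left_mono)
  qed
  have Ri: "integrable M (\<lambda>\<omega>. norm (ce *\<^sub>R (?a + iter_dd [(V 0 \<omega>, 0)] b (x, 0))))"
  proof (rule Bochner_Integration.integrable_bound[OF Gi Rm], rule AE_I2)
    fix \<omega>
    have "norm (ce *\<^sub>R (?a + iter_dd [(V 0 \<omega>, 0)] b (x, 0))) \<le> norm (G \<omega>)"
      using bnd[of \<omega>] abs_ge_self[of "G \<omega>"] by (simp only: real_norm_def)
    then show "norm (norm (ce *\<^sub>R (?a + iter_dd [(V 0 \<omega>, 0)] b (x, 0)))) \<le> norm (G \<omega>)"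
      by (simp only: real_norm_def abs_norm_cancel)
  qed
  have "integral\<^sup>L M (\<lambda>\<omega>. norm (ce *\<^sub>R (?a + iter_dd [(V 0 \<omega>, 0)] b (x, 0)))) \<le> integral\<^sup>L M G"
    by (rule Bochner_Integration.integral_mono[OF Ri Gi bnd])
  also have "integral\<^sup>L M G = ce * (B + ?N * B * (integral\<^sup>L M (\<lambda>\<omega>. norm (V 0 \<omega> - b (x, 0))) + B))"
    unfolding G_def using Vi by (simp add: prob_space algebra_simps)
  also have "integral\<^sup>L M (\<lambda>\<omega>. norm (V 0 \<omega> - b (x, 0))) \<le> 1 + Mp"
  proof -
    have "integral\<^sup>L M (\<lambda>\<omega>. norm (V 0 \<omega> - b (x, 0))) \<le> integral\<^sup>L M (\<lambda>\<omega>. 1 + norm (V 0 \<omega> - b (x, 0)) powr p)"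
      by (rule Bochner_Integration.integral_mono) (use Vi Vpi lin_le_powr[OF norm_ge_zero p] in auto)
    also have "\<dots> = 1 + integral\<^sup>L M (\<lambda>\<omega>. norm (V 0 \<omega> - b (x, 0)) powr p)"
      using Vpi by (simp add: prob_space)
    finally show ?thesis using Vpb by linarith
  qed
  also have "1 + Mp \<le> 1 + max 0 Mp" by simp
  finally have "integral\<^sup>L M (\<lambda>\<omega>. norm (ce *\<^sub>R (?a + iter_dd [(V 0 \<omega>, 0)] b (x, 0)))) \<le> ce * (B + ?N * B * (1 + max 0 Mp + B))"
    using ce0 B0 by (simp add: mult_left_mono mult_right_mono)
  then show ?thesis using Ri unfolding ce_def by (simp add: algebra_simps)
qed


lemma bracket_bound:
  fixes d0 :: "real^'n" and g :: "'n \<Rightarrow> real^'n" and h :: "'n \<Rightarrow> 'n \<Rightarrow> real^'n"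
  assumes B0: "B \<ge> 0" and d0: "norm d0 \<le> B" and g: "\<And>i. norm (g i) \<le> B" and h: "\<And>i j. norm (h i j) \<le> B"
  shows "norm (d0 + 2 *\<^sub>R (\<Sum>i\<in>UNIV. v$i *\<^sub>R g i) + (\<Sum>i\<in>UNIV. v$i *\<^sub>R (\<Sum>j\<in>UNIV. v$j *\<^sub>R h i j)))
     \<le> 2 * B * (1 + (real CARD('n))\<^sup>2) * (1 + (norm v)\<^sup>2)"
proof -
  let ?N = "real CARD('n)"
  have n1: "norm (\<Sum>i\<in>UNIV. v$i *\<^sub>R g i) \<le> ?N * norm v * B" by (rule norm_lin_bound[OF g])
  have hi: "norm (\<Sum>j\<in>UNIV. v$j *\<^sub>R h i j) \<le> ?N * norm v * B" for i by (rule norm_lin_bound[OF h])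
  have n2: "norm (\<Sum>i\<in>UNIV. v$i *\<^sub>R (\<Sum>j\<in>UNIV. v$j *\<^sub>R h i j)) \<le> ?N * norm v * (?N * norm v * B)"
    by (rule norm_lin_bound[OF hi])
  have "norm (d0 + 2 *\<^sub>R (\<Sum>i\<in>UNIV. v$i *\<^sub>R g i) + (\<Sum>i\<in>UNIV. v$i *\<^sub>R (\<Sum>j\<in>UNIV. v$j *\<^sub>R h i j)))
      \<le> norm d0 + 2 * norm (\<Sum>i\<in>UNIV. v$i *\<^sub>R g i) + norm (\<Sum>i\<in>UNIV. v$i *\<^sub>R (\<Sum>j\<in>UNIV. v$j *\<^sub>R h i j))"
    by (metis (no_types, lifting) add_mono norm_scaleR norm_triangle_ineq order_trans abs_numeral order_refl)
  also have "\<dots> \<le> B + 2 * (?N * norm v * B) + ?N * norm v * (?N * norm v * B)"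
    using d0 n1 n2 by linarith
  also have "\<dots> = B * (1 + 2 * (?N * norm v) + (?N * norm v)\<^sup>2)" by (simp add: algebra_simps power2_eq_square)
  also have "\<dots> \<le> B * (2 * (1 + (?N * norm v)\<^sup>2))"
  proof -
    have "2 * (?N * norm v) \<le> 1 + (?N * norm v)\<^sup>2" using sum_squares_bound[of "?N * norm v" 1] by (simp add: power2_eq_square algebra_simps)
    then show ?thesis using B0 by (intro mult_left_mono) auto
  qed
  also have "\<dots> \<le> 2 * B * (1 + ?N\<^sup>2) * (1 + (norm v)\<^sup>2)"
  proof -
    have "1 + (?N * norm v)\<^sup>2 \<le> (1 + ?N\<^sup>2) * (1 + (norm v)\<^sup>2)" by (simp add: power_mult_distrib algebra_simps)
    then show ?thesis using B0 by (simp add: algebra_simps mult_left_mono)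
  qed
  finally show ?thesis .
qed

lemma dd_cont_comp[continuous_intros]:
  fixes b :: "(real^'n) \<times> real \<Rightarrow> real^'n"
  assumes "smooth_bounded_derivs b" "continuous_on S g" "set us \<subseteq> Basis"
  shows "continuous_on S (\<lambda>s. iter_dd us b (g s))"
  by (rule continuous_on_compose2[OF dd_cont[OF assms(1,3)] assms(2)]) auto

lemma dd_meas[measurable]:
  fixes b :: "(real^'n) \<times> real \<Rightarrow> real^'n"
  assumes "smooth_bounded_derivs b" "set us \<subseteq> Basis"
  shows "iter_dd us b \<in> borel_measurable borel"
  by (rule borel_measurable_continuous_onI[OF dd_cont[OF assms]])

lemma partU:
  fixes W X V :: "real \<Rightarrow> 'a \<Rightarrow> real^'n" and b :: "(real^'n) \<times> real \<Rightarrow> real^'n"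
  assumes sb: "smooth_bounded_derivs b"
    and Bd: "\<forall>us z. set us \<subseteq> Basis \<and> length us \<le> 2 \<and> snd z \<ge> 0 \<longrightarrow> norm (iter_dd us b z) \<le> B"
    and B0: "B > 0"
    and bm: "std_brownian_motion M W" and ep: "\<epsilon> > 0" and p: "p \<ge> 2"
    and V0m: "V 0 \<in> borel_measurable M"
    and Vpi: "integrable M (\<lambda>\<omega>. norm (V 0 \<omega> - b (x, 0)) powr p)"
    and Vpb: "integral\<^sup>L M (\<lambda>\<omega>. norm (V 0 \<omega> - b (x, 0)) powr p) \<le> Mp"
    and XVm: "\<forall>t\<ge>0. X t \<in> borel_measurable M \<and> V t \<in> borel_measurable M"
    and path: "\<And>\<omega>. \<omega> \<in> space M \<Longrightarrow> continuous_on {0..} (\<lambda>t. X t \<omega>) \<and> continuous_on {0..} (\<lambda>t. V t \<omega>) \<and>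
       (\<forall>t\<ge>0. V t \<omega> = V 0 \<omega> + integral {0..t} (\<lambda>s. (1 / \<epsilon>) *\<^sub>R (b (X s \<omega>, s) - V s \<omega>)) + sqrt (2 / \<epsilon>) *\<^sub>R W t \<omega>)"
    and t: "t \<ge> 0"
  shows "integrable M (\<lambda>\<omega>. norm (\<epsilon> *\<^sub>R integral {0..t} (\<lambda>s. exp (- (t - s) / \<epsilon>) *\<^sub>R
                  (iter_dd [(0, 1), (0, 1)] b (X s \<omega>, s)
                   + 2 *\<^sub>R iter_dd [(0, 1), (V s \<omega>, 0)] b (X s \<omega>, s)
                   + iter_dd [(V s \<omega>, 0), (V s \<omega>, 0)] b (X s \<omega>, s))))) \<and>
     integral\<^sup>L M (\<lambda>\<omega>. norm (\<epsilon> *\<^sub>R integral {0..t} (\<lambda>s. exp (- (t - s) / \<epsilon>) *\<^sub>R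
                  (iter_dd [(0, 1), (0, 1)] b (X s \<omega>, s)
                   + 2 *\<^sub>R iter_dd [(0, 1), (V s \<omega>, 0)] b (X s \<omega>, s)
                   + iter_dd [(V s \<omega>, 0), (V s \<omega>, 0)] b (X s \<omega>, s)))))
     \<le> (2 * B * (1 + (real CARD('n))\<^sup>2)) * (1 + (9 * B\<^sup>2 + 6 + 6 * max 0 Mp + 18 * real CARD('n))) * \<epsilon>\<^sup>2"
proof -
  let ?N = "real CARD('n)"
  define KU where "KU = 2 * B * (1 + ?N\<^sup>2)"
  define K2 where "K2 = 9 * B\<^sup>2 + 6 + 6 * max 0 Mp + 18 * ?N"
  have KU0: "KU \<ge> 0" unfolding KU_def using B0 by simp
  have K20: "K2 \<ge> 0" unfolding K2_def by simp
  have ps: "prob_space M" using bm unfolding std_brownian_motion_def by blast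
  interpret prob_space M by (rule ps)
  have Bd': "norm (iter_dd us b z) \<le> B" if "set us \<subseteq> Basis" "length us \<le> 2" "snd z \<ge> 0" for us z
    using Bd that by blast
  define Dtt where "Dtt = iter_dd [(0,1),(0,1)] b"
  define G where "G i = iter_dd [(0,1), E i] b" for i
  define H where "H i j = iter_dd [E j, E i] b" for i j
  define \<Phi> where "\<Phi> s xv v = exp (-(t-s)/\<epsilon>) *\<^sub>R (Dtt (xv, s) + 2 *\<^sub>R (\<Sum>i\<in>UNIV. (v::real^'n)$i *\<^sub>R G i (xv, s))
       + (\<Sum>i\<in>UNIV. v$i *\<^sub>R (\<Sum>j\<in>UNIV. v$j *\<^sub>R H i j (xv, s))))" for s xv v
  have int_eq: "exp (- (t - s) / \<epsilon>) *\<^sub>R (iter_dd [(0, 1), (0, 1)] b (xv, s) + 2 *\<^sub>R iter_dd [(0, 1), (v, 0)] b (xv, s)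
      + iter_dd [(v, 0), (v, 0)] b (xv, s)) = \<Phi> s xv v" for s xv v
    unfolding \<Phi>_def Dtt_def G_def H_def by (simp only: dd2t[OF sb, of v] dd2v[OF sb, of v])
  have DttM[measurable]: "Dtt \<in> borel_measurable borel" unfolding Dtt_def by (rule dd_meas[OF sb]) (simp add: T_Basis)
  have GM[measurable]: "G i \<in> borel_measurable borel" for i unfolding G_def by (rule dd_meas[OF sb]) (simp add: T_Basis E_Basis)
  have HM[measurable]: "H i j \<in> borel_measurable borel" for i j unfolding H_def by (rule dd_meas[OF sb]) (simp add: E_Basis)
  have Phi_cont: "continuous_on S (\<lambda>s. \<Phi> (f1 s) (f2 s) (f3 s))" if "continuous_on S f1" "continuous_on S f2" "continuous_on S f3" for S f1 f2 f3
  proof -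
    have cD: "continuous_on S (\<lambda>s. Dtt (g s))" if "continuous_on S g" for g :: "'b \<Rightarrow> _"
      unfolding Dtt_def by (rule dd_cont_comp[OF sb that]) (simp add: T_Basis)
    have cG: "continuous_on S (\<lambda>s. G i (g s))" if "continuous_on S g" for g :: "'b \<Rightarrow> _" and i
      unfolding G_def by (rule dd_cont_comp[OF sb that]) (simp add: T_Basis E_Basis)
    have cH: "continuous_on S (\<lambda>s. H i j (g s))" if "continuous_on S g" for g :: "'b \<Rightarrow> _" and i j
      unfolding H_def by (rule dd_cont_comp[OF sb that]) (simp add: E_Basis)
    show ?thesis
      unfolding \<Phi>_def using that ep
      by (intro continuous_intros cD cG cH) auto
  qed
  have Phi_bound: "norm (\<Phi> s xv v) \<le> exp (-(t-s)/\<epsilon>) * (KU * (1 + (norm v)\<^sup>2))" if "s \<ge> 0" for s xv v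
  proof -
    have "norm (Dtt (xv, s) + 2 *\<^sub>R (\<Sum>i\<in>UNIV. v$i *\<^sub>R G i (xv, s)) + (\<Sum>i\<in>UNIV. v$i *\<^sub>R (\<Sum>j\<in>UNIV. v$j *\<^sub>R H i j (xv, s))))
        \<le> KU * (1 + (norm v)\<^sup>2)"
      unfolding KU_def
    proof (rule bracket_bound)
      show "0 \<le> B" using B0 by simp
      show "norm (Dtt (xv, s)) \<le> B" unfolding Dtt_def by (rule Bd') (use that T_Basis in auto)
      show "norm (G i (xv, s)) \<le> B" for i unfolding G_def by (rule Bd') (use that T_Basis E_Basis[of i] in auto)
      show "norm (H i j (xv, s)) \<le> B" for i j unfolding H_def by (rule Bd') (use that E_Basis[of i] E_Basis[of j] in auto)
    qed
    then show ?thesis unfolding \<Phi>_def by (simp add: mult_left_mono)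
  qed
  define Uf where "Uf \<omega> = \<epsilon> *\<^sub>R integral {0..t} (\<lambda>s. \<Phi> s (X s \<omega>) (V s \<omega>))" for \<omega>
  have Xm: "\<And>s. s \<ge> 0 \<Longrightarrow> X s \<in> borel_measurable M" and Vm: "\<And>s. s \<ge> 0 \<Longrightarrow> V s \<in> borel_measurable M"
    using XVm by auto
  have XJ[measurable]: "(\<lambda>z. X (max 0 (snd z)) (fst z)) \<in> borel_measurable (M \<Otimes>\<^sub>M lborel)"
    by (rule carath_meas'[OF Xm]) (use path in auto)
  have VJ[measurable]: "(\<lambda>z. V (max 0 (snd z)) (fst z)) \<in> borel_measurable (M \<Otimes>\<^sub>M lborel)"
    by (rule carath_meas'[OF Vm]) (use path in auto)
  have cPhi: "continuous_on {0..t} (\<lambda>s. \<Phi> s (X s \<omega>) (V s \<omega>))" if om: "\<omega> \<in> space M" for \<omega>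
  proof (rule Phi_cont)
    show "continuous_on {0..t} (\<lambda>s. s)" by (rule continuous_on_id)
    show "continuous_on {0..t} (\<lambda>s. X s \<omega>)" by (rule continuous_on_subset[of "{0..}"]) (use path[OF om] in auto)
    show "continuous_on {0..t} (\<lambda>s. V s \<omega>)" by (rule continuous_on_subset[of "{0..}"]) (use path[OF om] in auto)
  qed
  define f where "f \<omega> s = indicator {0..t} s *\<^sub>R \<Phi> s (X (max 0 s) \<omega>) (V (max 0 s) \<omega>)" for \<omega> s
  have fm: "(\<lambda>(\<omega>, s). f \<omega> s) \<in> borel_measurable (M \<Otimes>\<^sub>M lborel)"
    unfolding f_def \<Phi>_def by measurable
  have Ueq: "Uf \<omega> = \<epsilon> *\<^sub>R (\<integral>s. f \<omega> s \<partial>lborel)" if om: "\<omega> \<in> space M" for \<omega>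
  proof -
    have "integral {0..t} (\<lambda>s. \<Phi> s (X s \<omega>) (V s \<omega>)) = (LINT s:{0..t}|lborel. \<Phi> s (X s \<omega>) (V s \<omega>))"
      by (rule set_borel_integral_eq_integral(2)[symmetric, OF borel_integrable_atLeastAtMost'[OF cPhi[OF om]]])
    also have "\<dots> = (\<integral>s. f \<omega> s \<partial>lborel)"
      unfolding set_lebesgue_integral_def f_def
      by (intro Bochner_Integration.integral_cong) (auto simp: indicator_def max_def)
    finally show ?thesis unfolding Uf_def by simp
  qed
  have Um: "(\<lambda>\<omega>. norm (Uf \<omega>)) \<in> borel_measurable M"
  proof -
    have "(\<lambda>\<omega>. \<integral>s. f \<omega> s \<partial>lborel) \<in> borel_measurable M"
      by (rule lborel.borel_measurable_lebesgue_integral[OF fm])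
    then have "(\<lambda>\<omega>. norm (\<epsilon> *\<^sub>R (\<integral>s. f \<omega> s \<partial>lborel))) \<in> borel_measurable M" by measurable
    then show ?thesis by (rule measurable_cong[THEN iffD1, rotated]) (simp add: Ueq)
  qed
  define g where "g \<omega> s = ennreal (indicator {0..t} s * (exp (-(t-s)/\<epsilon>) * (KU * (1 + (norm (V (max 0 s) \<omega>))\<^sup>2))))" for \<omega> s
  define Gn where "Gn \<omega> = (\<integral>\<^sup>+s. g \<omega> s \<partial>lborel)" for \<omega>
  have gm: "(\<lambda>(\<omega>, s). g \<omega> s) \<in> borel_measurable (M \<Otimes>\<^sub>M lborel)"
    unfolding g_def by measurable
  have Gnm[measurable]: "Gn \<in> borel_measurable M"
    unfolding Gn_def by (rule lborel.borel_measurable_nn_integral[OF gm])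
  have pw: "ennreal (norm (Uf \<omega>)) \<le> ennreal \<epsilon> * Gn \<omega>" if om: "\<omega> \<in> space M" for \<omega>
  proof -
    have cV: "continuous_on {0..t} (\<lambda>s. V s \<omega>)" by (rule continuous_on_subset[of "{0..}"]) (use path[OF om] in auto)
    have cq: "continuous_on {0..t} (\<lambda>s. exp (-(t-s)/\<epsilon>) * (KU * (1 + (norm (V s \<omega>))\<^sup>2)))"
      using ep by (intro continuous_intros cV) auto
    have nb: "norm (integral {0..t} (\<lambda>s. \<Phi> s (X s \<omega>) (V s \<omega>))) \<le> integral {0..t} (\<lambda>s. exp (-(t-s)/\<epsilon>) * (KU * (1 + (norm (V s \<omega>))\<^sup>2)))"
      by (rule integral_norm_bound_integral[OF integrable_continuous_interval[OF cPhi[OF om]] integrable_continuous_interval[OF cq]])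
         (rule Phi_bound, auto)
    have ge: "ennreal (integral {0..t} (\<lambda>s. exp (-(t-s)/\<epsilon>) * (KU * (1 + (norm (V s \<omega>))\<^sup>2)))) = Gn \<omega>"
      unfolding Gn_def g_def by (rule hk_to_nn[symmetric, OF cq]) (use KU0 in \<open>auto simp: max_def\<close>)
    have "ennreal (norm (integral {0..t} (\<lambda>s. \<Phi> s (X s \<omega>) (V s \<omega>)))) \<le> Gn \<omega>"
      unfolding ge[symmetric] by (rule ennreal_leI[OF nb])
    then have "ennreal \<epsilon> * ennreal (norm (integral {0..t} (\<lambda>s. \<Phi> s (X s \<omega>) (V s \<omega>)))) \<le> ennreal \<epsilon> * Gn \<omega>"
      by (rule mult_left_mono) simp
    moreover have "ennreal (norm (Uf \<omega>)) = ennreal \<epsilon> * ennreal (norm (integral {0..t} (\<lambda>s. \<Phi> s (X s \<omega>) (V s \<omega>))))"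
      unfolding Uf_def using ep by (simp only: norm_scaleR abs_of_pos ennreal_mult norm_ge_zero less_imp_le)
    ultimately show ?thesis by simp
  qed
  have cb: "continuous_on UNIV b" using dd_cont[OF sb, of "[]"] by simp
  have Bb: "\<And>z. snd z \<ge> 0 \<Longrightarrow> norm (b z) \<le> B" using Bd'[of "[]"] by simp
  have Bc: "norm (b (x, 0)) \<le> B" using Bb[of "(x,0)"] by simp
  have mom: "(\<integral>\<^sup>+\<omega>. ennreal ((norm (V s \<omega>))\<^sup>2) \<partial>M) \<le> ennreal K2" if s: "s \<ge> 0" for s
  proof -
    have "(\<integral>\<^sup>+\<omega>. ennreal ((norm (V s \<omega>))\<^sup>2) \<partial>M) \<le> ennreal (9 * B\<^sup>2 + 6 + 6 * Mp + 18 * ?N)"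
      by (rule vmom[OF bm ep p V0m Vpi Vpb _ Bc Bb cb path s]) (use B0 in auto)
    also have "\<dots> \<le> ennreal K2" unfolding K2_def by (intro ennreal_leI) simp
    finally show ?thesis .
  qed
  have Gint: "(\<integral>\<^sup>+\<omega>. Gn \<omega> \<partial>M) \<le> ennreal (KU * (1 + K2) * \<epsilon>)"
  proof -
    interpret pf: pair_sigma_finite lborel M
      by (simp add: pair_sigma_finite_def lborel.sigma_finite_measure_axioms sigma_finite_measure_axioms)
    have gm': "(\<lambda>(s, \<omega>). g \<omega> s) \<in> borel_measurable (lborel \<Otimes>\<^sub>M M)"
      using measurable_pair_swap[OF gm] by (simp add: case_prod_beta')
    have "(\<integral>\<^sup>+\<omega>. Gn \<omega> \<partial>M) = (\<integral>\<^sup>+s. (\<integral>\<^sup>+\<omega>. g \<omega> s \<partial>M) \<partial>lborel)"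
      unfolding Gn_def by (rule pf.Fubini'[of "\<lambda>s \<omega>. g \<omega> s"]) (use gm' in simp)
    also have "\<dots> \<le> (\<integral>\<^sup>+s. ennreal (indicator {0..t} s * (exp (-(t-s)/\<epsilon>) * (KU * (1 + K2)))) \<partial>lborel)"
    proof (rule nn_integral_mono)
      fix s :: real
      show "(\<integral>\<^sup>+\<omega>. g \<omega> s \<partial>M) \<le> ennreal (indicator {0..t} s * (exp (-(t-s)/\<epsilon>) * (KU * (1 + K2))))"
      proof (cases "s \<in> {0..t}")
        case True
        then have s0: "max 0 s = s" "s \<ge> 0" by auto
        define cs where "cs = exp (-(t-s)/\<epsilon>) * KU"
        have cs0: "cs \<ge> 0" unfolding cs_def using KU0 by simp
        have "(\<integral>\<^sup>+\<omega>. g \<omega> s \<partial>M) = (\<integral>\<^sup>+\<omega>. ennreal cs * (1 + ennreal ((norm (V s \<omega>))\<^sup>2)) \<partial>M)"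
        proof (rule nn_integral_cong)
          fix \<omega>
          have e1: "indicator {0..t} s * (exp (-(t-s)/\<epsilon>) * (KU * (1 + (norm (V (max 0 s) \<omega>))\<^sup>2))) = cs * (1 + (norm (V s \<omega>))\<^sup>2)"
            using True s0 by (simp add: cs_def mult.assoc)
          have "ennreal (cs * (1 + (norm (V s \<omega>))\<^sup>2)) = ennreal cs * ennreal (1 + (norm (V s \<omega>))\<^sup>2)"
            using cs0 by (intro ennreal_mult) auto
          also have "ennreal (1 + (norm (V s \<omega>))\<^sup>2) = 1 + ennreal ((norm (V s \<omega>))\<^sup>2)"
            by (subst ennreal_plus) auto
          finally show "g \<omega> s = ennreal cs * (1 + ennreal ((norm (V s \<omega>))\<^sup>2))"
            unfolding g_def e1 .
        qed
        also have "\<dots> = ennreal cs * (1 + (\<integral>\<^sup>+\<omega>. ennreal ((norm (V s \<omega>))\<^sup>2) \<partial>M))"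
          using Vm[OF s0(2)] by (simp add: nn_integral_cmult nn_integral_add emeasure_space_1)
        also have "\<dots> \<le> ennreal cs * (1 + ennreal K2)"
          by (intro mult_left_mono add_left_mono mom s0) simp
        also have "\<dots> = ennreal (indicator {0..t} s * (exp (-(t-s)/\<epsilon>) * (KU * (1 + K2))))"
        proof -
          have "1 + ennreal K2 = ennreal (1 + K2)" using K20 by (subst ennreal_plus) auto
          moreover have "ennreal cs * ennreal (1 + K2) = ennreal (cs * (1 + K2))"
            using cs0 K20 by (intro ennreal_mult[symmetric]) auto
          moreover have "cs * (1 + K2) = indicator {0..t} s * (exp (-(t-s)/\<epsilon>) * (KU * (1 + K2)))"
            using True by (simp add: cs_def mult.assoc)
          ultimately show ?thesis by simp
        qed
        finally show ?thesis .
      next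
        case False
        then show ?thesis unfolding g_def by simp
      qed
    qed
    also have "\<dots> = ennreal (integral {0..t} (\<lambda>s. exp (-(t-s)/\<epsilon>) * (KU * (1 + K2))))"
      by (rule hk_to_nn) (use KU0 K20 ep in \<open>auto intro!: continuous_intros\<close>)
    also have "integral {0..t} (\<lambda>s. exp (-(t-s)/\<epsilon>) * (KU * (1 + K2))) = integral {0..t} (\<lambda>s. exp (-(t-s)/\<epsilon>)) * (KU * (1 + K2))"
      by simp
    also have "ennreal (integral {0..t} (\<lambda>s. exp (-(t-s)/\<epsilon>)) * (KU * (1 + K2))) \<le> ennreal (\<epsilon> * (KU * (1 + K2)))"
      by (intro ennreal_leI mult_right_mono kern_int_le ep t) (use KU0 K20 in simp)
    finally show ?thesis by (simp add: algebra_simps)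
  qed
  have tot: "(\<integral>\<^sup>+\<omega>. ennreal (norm (Uf \<omega>)) \<partial>M) \<le> ennreal (KU * (1 + K2) * \<epsilon>\<^sup>2)"
  proof -
    have "(\<integral>\<^sup>+\<omega>. ennreal (norm (Uf \<omega>)) \<partial>M) \<le> (\<integral>\<^sup>+\<omega>. ennreal \<epsilon> * Gn \<omega> \<partial>M)"
      by (rule nn_integral_mono) (rule pw)
    also have "\<dots> = ennreal \<epsilon> * (\<integral>\<^sup>+\<omega>. Gn \<omega> \<partial>M)" by (rule nn_integral_cmult) simp
    also have "\<dots> \<le> ennreal \<epsilon> * ennreal (KU * (1 + K2) * \<epsilon>)" by (intro mult_left_mono Gint) simp
    also have "\<dots> = ennreal (KU * (1 + K2) * \<epsilon>\<^sup>2)"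
      using ep KU0 K20 by (simp add: ennreal_mult[symmetric] power2_eq_square algebra_simps)
    finally show ?thesis .
  qed
  have Ui: "integrable M (\<lambda>\<omega>. norm (Uf \<omega>))"
  proof (rule integrableI_bounded[OF Um])
    have "(\<integral>\<^sup>+\<omega>. ennreal (norm (norm (Uf \<omega>))) \<partial>M) = (\<integral>\<^sup>+\<omega>. ennreal (norm (Uf \<omega>)) \<partial>M)" by simp
    also have "\<dots> < \<infinity>" using tot by (simp add: le_less_trans)
    finally show "(\<integral>\<^sup>+\<omega>. ennreal (norm (norm (Uf \<omega>))) \<partial>M) < \<infinity>" .
  qed
  have Ub: "integral\<^sup>L M (\<lambda>\<omega>. norm (Uf \<omega>)) \<le> KU * (1 + K2) * \<epsilon>\<^sup>2"
  proof -
    have "integral\<^sup>L M (\<lambda>\<omega>. norm (Uf \<omega>)) = enn2real (\<integral>\<^sup>+\<omega>. ennreal (norm (Uf \<omega>)) \<partial>M)"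
      by (rule integral_eq_nn_integral[OF Um]) simp
    also have "\<dots> \<le> KU * (1 + K2) * \<epsilon>\<^sup>2" by (rule enn2real_leI[OF _ tot]) (use KU0 K20 in simp)
    finally show ?thesis .
  qed
  have eqU: "(\<lambda>\<omega>. norm (\<epsilon> *\<^sub>R integral {0..t} (\<lambda>s. exp (- (t - s) / \<epsilon>) *\<^sub>R
                  (iter_dd [(0, 1), (0, 1)] b (X s \<omega>, s)
                   + 2 *\<^sub>R iter_dd [(0, 1), (V s \<omega>, 0)] b (X s \<omega>, s)
                   + iter_dd [(V s \<omega>, 0), (V s \<omega>, 0)] b (X s \<omega>, s))))) = (\<lambda>\<omega>. norm (Uf \<omega>))"
    unfolding Uf_def by (simp only: int_eq)
  show ?thesis unfolding eqU using Ui Ub unfolding KU_def K2_def by blast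
qed


theorem lemma5p2:
  fixes b :: "(real^'n) \<times> real \<Rightarrow> real^'n" and p Mp :: real
  assumes "smooth_bounded_derivs b"
    and "periodic_in_x b"
    and "p \<ge> 4"
  shows "\<exists>C>0. \<forall>(M :: 'a measure) (\<epsilon>::real) (x::real^'n) (W :: real \<Rightarrow> 'a \<Rightarrow> real^'n) (X :: real \<Rightarrow> 'a \<Rightarrow> real^'n) (V :: real \<Rightarrow> 'a \<Rightarrow> real^'n).
    \<epsilon> > 0 \<and>
    std_brownian_motion M W \<and>
    V 0 \<in> borel_measurable M \<and>
    prob_space.indep_set M (sets (vimage_algebra (space M) (V 0) borel))
      (sets (vimage_algebra (space M) (\<lambda>\<omega> t. W t \<omega>) (Pi\<^sub>M UNIV (\<lambda>_::real. borel)))) \<and>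
    integrable M (\<lambda>\<omega>. V 0 \<omega> - b (x, 0)) \<and>
    integral\<^sup>L M (\<lambda>\<omega>. V 0 \<omega> - b (x, 0)) = 0 \<and>
    integrable M (\<lambda>\<omega>. norm (V 0 \<omega> - b (x, 0)) powr p) \<and>
    integral\<^sup>L M (\<lambda>\<omega>. norm (V 0 \<omega> - b (x, 0)) powr p) \<le> Mp \<and>
    (\<forall>t\<ge>0. X t \<in> borel_measurable M \<and> V t \<in> borel_measurable M) \<and>
    (\<forall>\<omega>\<in>space M. continuous_on {0..} (\<lambda>t. X t \<omega>) \<and> continuous_on {0..} (\<lambda>t. V t \<omega>) \<and>
       (\<forall>t\<ge>0.
          X t \<omega> = x + integral {0..t} (\<lambda>s. V s \<omega>) \<and>
          V t \<omega> = V 0 \<omega> + integral {0..t} (\<lambda>s. (1 / \<epsilon>) *\<^sub>R (b (X s \<omega>, s) - V s \<omega>))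
                    + sqrt (2 / \<epsilon>) *\<^sub>R W t \<omega>))
    \<longrightarrow>
    (\<forall>t\<ge>0.
      (let Rhat = (\<lambda>\<omega>. (\<epsilon> * exp (- t / \<epsilon>)) *\<^sub>R
                  (iter_dd [(0, 1)] b (x, 0) + iter_dd [(V 0 \<omega>, 0)] b (x, 0)));
           U = (\<lambda>\<omega>. \<epsilon> *\<^sub>R integral {0..t} (\<lambda>s. exp (- (t - s) / \<epsilon>) *\<^sub>R
                  (iter_dd [(0, 1), (0, 1)] b (X s \<omega>, s)
                   + 2 *\<^sub>R iter_dd [(0, 1), (V s \<omega>, 0)] b (X s \<omega>, s)
                   + iter_dd [(V s \<omega>, 0), (V s \<omega>, 0)] b (X s \<omega>, s))))
       in integrable M (\<lambda>\<omega>. norm (Rhat \<omega>)) \<and>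
          integral\<^sup>L M (\<lambda>\<omega>. norm (Rhat \<omega>)) \<le> C * \<epsilon> * exp (- t / \<epsilon>) \<and>
          integrable M (\<lambda>\<omega>. norm (U \<omega>)) \<and>
          integral\<^sup>L M (\<lambda>\<omega>. norm (U \<omega>)) \<le> C * \<epsilon>\<^sup>2))"
proof -
  obtain B where B0: "B > 0" and Bd: "\<forall>us z. set us \<subseteq> Basis \<and> length us \<le> 2 \<and> snd z \<ge> 0 \<longrightarrow> norm (iter_dd us b z) \<le> B"
    using dd_bound[OF assms(1)] by blast
  define CR where "CR = B + real CARD('n) * B * (1 + max 0 Mp + B)"
  define CU where "CU = (2 * B * (1 + (real CARD('n))\<^sup>2)) * (1 + (9 * B\<^sup>2 + 6 + 6 * max 0 Mp + 18 * real CARD('n)))"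
  have CR0: "CR \<ge> 0" unfolding CR_def using B0 by simp
  have CU0: "CU \<ge> 0" unfolding CU_def using B0 by simp
  show ?thesis
  proof (intro exI[of _ "CR + CU + 1"] conjI allI impI)
    show "CR + CU + 1 > 0" using CR0 CU0 by simp
  next
    fix M :: "'a measure" and \<epsilon> :: real and x :: "real^'n" and W X V :: "real \<Rightarrow> 'a \<Rightarrow> real^'n" and t :: real
    assume H: "\<epsilon> > 0 \<and>
    std_brownian_motion M W \<and>
    V 0 \<in> borel_measurable M \<and>
    prob_space.indep_set M (sets (vimage_algebra (space M) (V 0) borel))
      (sets (vimage_algebra (space M) (\<lambda>\<omega> t. W t \<omega>) (Pi\<^sub>M UNIV (\<lambda>_::real. borel)))) \<and>
    integrable M (\<lambda>\<omega>. V 0 \<omega> - b (x, 0)) \<and>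
    integral\<^sup>L M (\<lambda>\<omega>. V 0 \<omega> - b (x, 0)) = 0 \<and>
    integrable M (\<lambda>\<omega>. norm (V 0 \<omega> - b (x, 0)) powr p) \<and>
    integral\<^sup>L M (\<lambda>\<omega>. norm (V 0 \<omega> - b (x, 0)) powr p) \<le> Mp \<and>
    (\<forall>t\<ge>0. X t \<in> borel_measurable M \<and> V t \<in> borel_measurable M) \<and>
    (\<forall>\<omega>\<in>space M. continuous_on {0..} (\<lambda>t. X t \<omega>) \<and> continuous_on {0..} (\<lambda>t. V t \<omega>) \<and>
       (\<forall>t\<ge>0.
          X t \<omega> = x + integral {0..t} (\<lambda>s. V s \<omega>) \<and>
          V t \<omega> = V 0 \<omega> + integral {0..t} (\<lambda>s. (1 / \<epsilon>) *\<^sub>R (b (X s \<omega>, s) - V s \<omega>))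
                    + sqrt (2 / \<epsilon>) *\<^sub>R W t \<omega>))"
      and t: "t \<ge> 0"
    have ep: "\<epsilon> > 0" and bm: "std_brownian_motion M W" and V0m: "V 0 \<in> borel_measurable M"
      and Vi: "integrable M (\<lambda>\<omega>. V 0 \<omega> - b (x, 0))"
      and Vpi: "integrable M (\<lambda>\<omega>. norm (V 0 \<omega> - b (x, 0)) powr p)"
      and Vpb: "integral\<^sup>L M (\<lambda>\<omega>. norm (V 0 \<omega> - b (x, 0)) powr p) \<le> Mp"
      and XVm: "\<forall>t\<ge>0. X t \<in> borel_measurable M \<and> V t \<in> borel_measurable M"
      using H by blast+
    have path: "continuous_on {0..} (\<lambda>t. X t \<omega>) \<and> continuous_on {0..} (\<lambda>t. V t \<omega>) \<and>
       (\<forall>t\<ge>0. V t \<omega> = V 0 \<omega> + integral {0..t} (\<lambda>s. (1 / \<epsilon>) *\<^sub>R (b (X s \<omega>, s) - V s \<omega>)) + sqrt (2 / \<epsilon>) *\<^sub>R W t \<omega>)"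
      if "\<omega> \<in> space M" for \<omega>
      using H that by blast
    have ps: "prob_space M" using bm unfolding std_brownian_motion_def by blast
    have p1: "p \<ge> 1" and p2: "p \<ge> 2" using assms(3) by auto
    have R: "integrable M (\<lambda>\<omega>. norm ((\<epsilon> * exp (- t / \<epsilon>)) *\<^sub>R (iter_dd [(0, 1)] b (x, 0) + iter_dd [(V 0 \<omega>, 0)] b (x, 0)))) \<and>
     integral\<^sup>L M (\<lambda>\<omega>. norm ((\<epsilon> * exp (- t / \<epsilon>)) *\<^sub>R (iter_dd [(0, 1)] b (x, 0) + iter_dd [(V 0 \<omega>, 0)] b (x, 0))))
       \<le> CR * \<epsilon> * exp (- t / \<epsilon>)"
      unfolding CR_def by (rule partR[where b=b and B=B and M=M and \<epsilon>=\<epsilon> and p=p and V=V and x=x and Mp=Mp and t=t, OF assms(1) Bd B0 ps ep p1 V0m Vi Vpi Vpb])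
    have U: "integrable M (\<lambda>\<omega>. norm (\<epsilon> *\<^sub>R integral {0..t} (\<lambda>s. exp (- (t - s) / \<epsilon>) *\<^sub>R
                  (iter_dd [(0, 1), (0, 1)] b (X s \<omega>, s)
                   + 2 *\<^sub>R iter_dd [(0, 1), (V s \<omega>, 0)] b (X s \<omega>, s)
                   + iter_dd [(V s \<omega>, 0), (V s \<omega>, 0)] b (X s \<omega>, s))))) \<and>
     integral\<^sup>L M (\<lambda>\<omega>. norm (\<epsilon> *\<^sub>R integral {0..t} (\<lambda>s. exp (- (t - s) / \<epsilon>) *\<^sub>R
                  (iter_dd [(0, 1), (0, 1)] b (X s \<omega>, s)
                   + 2 *\<^sub>R iter_dd [(0, 1), (V s \<omega>, 0)] b (X s \<omega>, s)
                   + iter_dd [(V s \<omega>, 0), (V s \<omega>, 0)] b (X s \<omega>, s)))))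
     \<le> CU * \<epsilon>\<^sup>2"
      unfolding CU_def by (rule partU[where b=b and B=B and M=M and \<epsilon>=\<epsilon> and p=p and V=V and X=X and W=W and x=x and Mp=Mp and t=t, OF assms(1) Bd B0 bm ep p2 V0m Vpi Vpb XVm path t])
    have m1: "CR * \<epsilon> * exp (- t / \<epsilon>) \<le> (CR + CU + 1) * \<epsilon> * exp (- t / \<epsilon>)"
      using CU0 ep by (intro mult_right_mono) auto
    have m2: "CU * \<epsilon>\<^sup>2 \<le> (CR + CU + 1) * \<epsilon>\<^sup>2"
      using CR0 by (intro mult_right_mono) auto
    show "let Rhat = (\<lambda>\<omega>. (\<epsilon> * exp (- t / \<epsilon>)) *\<^sub>R
                  (iter_dd [(0, 1)] b (x, 0) + iter_dd [(V 0 \<omega>, 0)] b (x, 0)));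
           U = (\<lambda>\<omega>. \<epsilon> *\<^sub>R integral {0..t} (\<lambda>s. exp (- (t - s) / \<epsilon>) *\<^sub>R
                  (iter_dd [(0, 1), (0, 1)] b (X s \<omega>, s)
                   + 2 *\<^sub>R iter_dd [(0, 1), (V s \<omega>, 0)] b (X s \<omega>, s)
                   + iter_dd [(V s \<omega>, 0), (V s \<omega>, 0)] b (X s \<omega>, s))))
       in integrable M (\<lambda>\<omega>. norm (Rhat \<omega>)) \<and>
          integral\<^sup>L M (\<lambda>\<omega>. norm (Rhat \<omega>)) \<le> (CR + CU + 1) * \<epsilon> * exp (- t / \<epsilon>) \<and>
          integrable M (\<lambda>\<omega>. norm (U \<omega>)) \<and>
          integral\<^sup>L M (\<lambda>\<omega>. norm (U \<omega>)) \<le> (CR + CU + 1) * \<epsilon>\<^sup>2"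
      unfolding Let_def using R U m1 m2 by (meson order_trans)
  qed
qed

end
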